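(* For every integer $m\ge 0$, the dimension of the subspace $F(L)^{(3,m)}$ of $F(L)$ spanned by classes with exactly $3$ letters $x$ and $m$ letters $y$ equals $\lfloor\frac{m-1}{2}\rfloor-\lfloor\frac{m-1}{3}\rfloor$.
   Context: $A=\mathbb{R}\langle x,y\rangle$; $L\subset A$ is the free Lie algebra on $x,y$ (smallest Lie subalgebra of $(A,[a,b]=ab-ba)$ containing $x,y$). $F(L)$ is the quotient of $L\otimes L$ by the span of $a\otimes b-b\otimes a$ and $a\otimes[b,c]-[a,b]\otimes c$ ($a,b,c\in L$); it is bigraded by the numbers of letters $x$ and $y$. *)

theory Defs
  imports Complex_Main "HOL-Library.Function_Algebras"
begin

text \<open>Free associative algebra A = R<x,y>: an element is a (finitely supported)
  coefficient function on words; a word is a bool list, False = letter x, True = letter y.\<close>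

type_synonym word = "bool list"
type_synonym ncpoly = "word \<Rightarrow> real"

definition fin_supp :: "ncpoly \<Rightarrow> bool" where
  "fin_supp p \<longleftrightarrow> finite {w. p w \<noteq> 0}"

definition A_set :: "ncpoly set" where
  "A_set = {p. fin_supp p}"

definition letX :: ncpoly where "letX = (\<lambda>w. if w = [False] then 1 else 0)"
definition letY :: ncpoly where "letY = (\<lambda>w. if w = [True] then 1 else 0)"

definition amul :: "ncpoly \<Rightarrow> ncpoly \<Rightarrow> ncpoly" where
  "amul p q = (\<lambda>w. \<Sum>i\<le>length w. p (take i w) * q (drop i w))"

definition ascale :: "real \<Rightarrow> ncpoly \<Rightarrow> ncpoly" where
  "ascale c p = (\<lambda>w. c * p w)"

definition lbr :: "ncpoly \<Rightarrow> ncpoly \<Rightarrow> ncpoly" where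
  "lbr a b = amul a b - amul b a"

inductive_set freeLie :: "ncpoly set" where
  gen_x: "letX \<in> freeLie"
| gen_y: "letY \<in> freeLie"
| zero: "0 \<in> freeLie"
| add: "a \<in> freeLie \<Longrightarrow> b \<in> freeLie \<Longrightarrow> a + b \<in> freeLie"
| scale: "a \<in> freeLie \<Longrightarrow> ascale c a \<in> freeLie"
| bracket: "a \<in> freeLie \<Longrightarrow> b \<in> freeLie \<Longrightarrow> lbr a b \<in> freeLie"

text \<open>A \<otimes> A is realised as (finitely supported) functions on pairs of words, with
  a \<otimes> b = (u,v) \<mapsto> a u * b v. Since R is a field, L \<otimes> L embeds in A \<otimes> A as the
  span of the pure tensors a \<otimes> b with a, b in L.\<close>

type_synonym tens2 = "word \<times> word \<Rightarrow> real"

definition tscale :: "real \<Rightarrow> tens2 \<Rightarrow> tens2" where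
  "tscale c t = (\<lambda>uv. c * t uv)"

definition tens :: "ncpoly \<Rightarrow> ncpoly \<Rightarrow> tens2" where
  "tens a b = (\<lambda>(u, v). a u * b v)"

abbreviation tspan :: "tens2 set \<Rightarrow> tens2 set" where
  "tspan S \<equiv> module.span tscale S"

abbreviation tdim :: "tens2 set \<Rightarrow> nat" where
  "tdim S \<equiv> vector_space.dim tscale S"

definition LtensL :: "tens2 set" where
  "LtensL = tspan {tens a b | a b. a \<in> freeLie \<and> b \<in> freeLie}"

text \<open>Relations defining F(L) = (L \<otimes> L) / RelF.\<close>
definition RelF :: "tens2 set" where
  "RelF = tspan ({tens a b - tens b a | a b. a \<in> freeLie \<and> b \<in> freeLie}
             \<union> {tens a (lbr b c) - tens (lbr a b) c | a b c.
                   a \<in> freeLie \<and> b \<in> freeLie \<and> c \<in> freeLie})"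

definition nx :: "word \<Rightarrow> nat" where "nx w = length (filter (\<lambda>b. \<not> b) w)"
definition ny :: "word \<Rightarrow> nat" where "ny w = length (filter (\<lambda>b. b) w)"

definition LtensL_bideg :: "nat \<Rightarrow> nat \<Rightarrow> tens2 set" where
  "LtensL_bideg p q = {t \<in> LtensL. \<forall>u v. t (u, v) \<noteq> 0 \<longrightarrow>
        nx u + nx v = p \<and> ny u + ny v = q}"

text \<open>dim F(L)^{(p,q)}: the subspace of F(L) spanned by the classes of bidegree (p,q)
  is the image of LtensL_bideg p q in the quotient, i.e. isomorphic to
  LtensL_bideg p q / (LtensL_bideg p q \<inter> RelF); its dimension is
  dim (LtensL_bideg p q) - dim (LtensL_bideg p q \<inter> RelF).\<close>
definition dimF :: "nat \<Rightarrow> nat \<Rightarrow> nat" where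
  "dimF p q = tdim (LtensL_bideg p q) - tdim (LtensL_bideg p q \<inter> RelF)"

end

theory Submission
  imports Defs "HOL-Analysis.Determinants" "HOL-Computational_Algebra.Polynomial"
begin


lemma vs_a: "vector_space ascale"
  by unfold_locales (auto simp: ascale_def fun_eq_iff algebra_simps)
lemma vs_t: "vector_space tscale"
  by unfold_locales (auto simp: tscale_def fun_eq_iff algebra_simps)

interpretation VA: vector_space ascale by (rule vs_a)
interpretation VT: vector_space tscale by (rule vs_t)

lemma fun_sum_apply: "(sum f A) x = sum (\<lambda>a. f a x) A"
  by (induction A rule: infinite_finite_induct) auto

lemma bilin_span:
  assumes v1: "vector_space s1" and v2: "vector_space s2" and v3: "vector_space s3"
  and la: "\<And>a a' b. f (a + a') b = f a b + f a' b"
  and ls: "\<And>c a b. f (s1 c a) b = s3 c (f a b)"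
  and ra: "\<And>a b b'. f a (b + b') = f a b + f a b'"
  and rs: "\<And>c a b. f a (s2 c b) = s3 c (f a b)"
  and a: "a \<in> module.span s1 A" and b: "b \<in> module.span s2 B"
  shows "f a b \<in> module.span s3 {f u v | u v. u \<in> A \<and> v \<in> B}"
proof -
  interpret M1: vector_space s1 by (rule v1)
  interpret M2: vector_space s2 by (rule v2)
  interpret M3: vector_space s3 by (rule v3)
  let ?G = "{f u v | u v. u \<in> A \<and> v \<in> B}"
  have l0: "f 0 y = 0" for y using la[of 0 0 y] by simp
  have r0: "f x 0 = 0" for x using ra[of x 0 0] by simp
  have inner: "f u b \<in> M3.span ?G" if "u \<in> A" for u
    using b
  proof (induction b rule: M2.span_induct_alt)
    case base then show ?case by (simp add: r0 M3.span_zero)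
  next
    case (step c x y)
    have "f u x \<in> M3.span ?G" using step.hyps(1) \<open>u \<in> A\<close> by (auto intro!: M3.span_base)
    then show ?case using step.IH
      by (simp add: ra rs M3.span_add M3.span_scale)
  qed
  show ?thesis using a
  proof (induction a rule: M1.span_induct_alt)
    case base then show ?case by (simp add: l0 M3.span_zero)
  next
    case (step c x y)
    then show ?case using inner[OF step.hyps(1)]
      by (simp add: la ls M3.span_add M3.span_scale)
  qed
qed

section \<open>The associative product\<close>

lemma amul_Nil[simp]: "amul p q [] = p [] * q []"
  by (simp add: amul_def)

lemma amul_Cons: "amul p q (a # w) = p [] * q (a # w) + amul (\<lambda>u. p (a # u)) q w"
  unfolding amul_def by (simp add: sum.atMost_Suc_shift del: sum.atMost_Suc)

lemma amul_add_left: "amul (p + p') q = amul p q + amul p' q"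
  by (simp add: amul_def fun_eq_iff sum.distrib algebra_simps)
lemma amul_add_right: "amul p (q + q') = amul p q + amul p q'"
  by (simp add: amul_def fun_eq_iff sum.distrib algebra_simps)
lemma amul_diff_left: "amul (p - p') q = amul p q - amul p' q"
  by (simp add: amul_def fun_eq_iff sum_subtractf algebra_simps)
lemma amul_diff_right: "amul p (q - q') = amul p q - amul p q'"
  by (simp add: amul_def fun_eq_iff sum_subtractf algebra_simps)
lemma amul_scale_left: "amul (ascale c p) q = ascale c (amul p q)"
  by (simp add: amul_def ascale_def fun_eq_iff sum_distrib_left algebra_simps)
lemma amul_scale_right: "amul p (ascale c q) = ascale c (amul p q)"
  by (simp add: amul_def ascale_def fun_eq_iff sum_distrib_left algebra_simps)
lemma amul_zero_left[simp]: "amul 0 q = 0"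
  by (simp add: amul_def fun_eq_iff)
lemma amul_zero_right[simp]: "amul p 0 = 0"
  by (simp add: amul_def fun_eq_iff)
lemma amul_cmul_left: "amul (\<lambda>u. c * p u) q = (\<lambda>w. c * amul p q w)"
  using amul_scale_left[of c p q] by (simp add: ascale_def)

lemma amul_assoc: "amul (amul p q) r = amul p (amul q r)"
proof (rule ext)
  fix w show "amul (amul p q) r w = amul p (amul q r) w"
  proof (induction w arbitrary: p q r)
    case Nil then show ?case by simp
  next
    case (Cons a w)
    have e: "(\<lambda>u. amul p q (a # u)) = (\<lambda>u. p [] * q (a # u)) + amul (\<lambda>u. p (a # u)) q"
      by (simp add: fun_eq_iff amul_Cons)
    have "amul (\<lambda>u. amul p q (a # u)) r = (\<lambda>w. p [] * amul (\<lambda>u. q (a # u)) r w) + amul (amul (\<lambda>u. p (a # u)) q) r"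
      by (simp only: e amul_add_left amul_cmul_left)
    then show ?case
      by (simp add: amul_Cons Cons.IH algebra_simps)
  qed
qed

lemma lbr_antisym: "lbr a b = - lbr b a"
  by (simp add: lbr_def)

lemma lbr_self[simp]: "lbr a a = 0"
  by (simp add: lbr_def)

lemma lbr_jacobi: "lbr a (lbr b c) = lbr (lbr a b) c + lbr b (lbr a c)"
  by (simp add: lbr_def amul_diff_left amul_diff_right amul_assoc algebra_simps)

lemma lbr_add_left: "lbr (a + a') b = lbr a b + lbr a' b"
  by (simp add: lbr_def amul_add_left amul_add_right algebra_simps)
lemma lbr_add_right: "lbr a (b + b') = lbr a b + lbr a b'"
  by (simp add: lbr_def amul_add_left amul_add_right algebra_simps)
lemma lbr_scale_left: "lbr (ascale c a) b = ascale c (lbr a b)"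
  unfolding lbr_def amul_scale_left amul_scale_right by (simp add: ascale_def fun_eq_iff algebra_simps)
lemma lbr_scale_right: "lbr a (ascale c b) = ascale c (lbr a b)"
  unfolding lbr_def amul_scale_left amul_scale_right by (simp add: ascale_def fun_eq_iff algebra_simps)
lemma lbr_minus_left: "lbr (- a) b = - lbr a b"
  by (simp add: lbr_def amul_def fun_eq_iff sum_negf)
lemma lbr_minus_right: "lbr a (- b) = - lbr a b"
  by (simp add: lbr_def amul_def fun_eq_iff sum_negf)
lemma lbr_zero_left[simp]: "lbr 0 b = 0" by (simp add: lbr_def)
lemma lbr_zero_right[simp]: "lbr a 0 = 0" by (simp add: lbr_def)

lemma tens_add_left: "tens (a + a') b = tens a b + tens a' b"
  by (simp add: tens_def fun_eq_iff algebra_simps)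
lemma tens_add_right: "tens a (b + b') = tens a b + tens a b'"
  by (simp add: tens_def fun_eq_iff algebra_simps)
lemma tens_scale_left: "tens (ascale c a) b = tscale c (tens a b)"
  by (simp add: tens_def ascale_def tscale_def fun_eq_iff)
lemma tens_scale_right: "tens a (ascale c b) = tscale c (tens a b)"
  by (simp add: tens_def ascale_def tscale_def fun_eq_iff)
lemma tens_minus_right: "tens a (- b) = - tens a b"
  by (simp add: tens_def fun_eq_iff)
lemma tens_minus_left: "tens (- a) b = - tens a b"
  by (simp add: tens_def fun_eq_iff)
lemma tens_zero_right[simp]: "tens a 0 = 0"
  by (simp add: tens_def fun_eq_iff)
lemma tens_zero_left[simp]: "tens 0 b = 0"
  by (simp add: tens_def fun_eq_iff)

lemma lbr_span:
  "a \<in> VA.span A \<Longrightarrow> b \<in> VA.span B \<Longrightarrow> lbr a b \<in> VA.span {lbr u v | u v. u \<in> A \<and> v \<in> B}"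
  by (rule bilin_span[OF vs_a vs_a vs_a])
     (simp_all only: lbr_add_left lbr_add_right lbr_scale_left lbr_scale_right)

lemma tens_span:
  "a \<in> VA.span A \<Longrightarrow> b \<in> VA.span B \<Longrightarrow> tens a b \<in> VT.span {tens u v | u v. u \<in> A \<and> v \<in> B}"
  by (rule bilin_span[OF vs_a vs_a vs_t])
     (simp_all only: tens_add_left tens_add_right tens_scale_left tens_scale_right)



lemma gdd: "(x::'a::ab_group_add) - y + (y - z) = x - z" by simp
lemma gdd2: "(x::'a::ab_group_add) + y + (z - y) = x + z" by simp

lemma nat_chain:
  assumes "P h" "a \<le> h" "h \<le> b"
    and st: "\<And>j. a \<le> j \<Longrightarrow> j < b \<Longrightarrow> P j \<longleftrightarrow> P (Suc j)"
    and "a \<le> j" "j \<le> b"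
  shows "P j"
proof -
  have up: "\<forall>d. h + d \<le> b \<longrightarrow> P (h + d)"
  proof
    fix d show "h + d \<le> b \<longrightarrow> P (h + d)"
    proof (induction d)
      case 0 then show ?case using assms(1) by simp
    next
      case (Suc d)
      show ?case
      proof
        assume d: "h + Suc d \<le> b"
        then have "P (h + d)" using Suc by simp
        moreover have "a \<le> h + d" "h + d < b" using d assms(2) by auto
        ultimately show "P (h + Suc d)" using st[of "h + d"] by simp
      qed
    qed
  qed
  have down: "\<forall>d. d \<le> h - a \<longrightarrow> P (h - d)"
  proof
    fix d show "d \<le> h - a \<longrightarrow> P (h - d)"
    proof (induction d)
      case 0 then show ?case using assms by simp
    next
      case (Suc d)
      show ?case
      proof
        assume d: "Suc d \<le> h - a"
        then have "P (h - d)" using Suc by simp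
        moreover have "h - d = Suc (h - Suc d)" using d by simp
        ultimately show "P (h - Suc d)" using st[of "h - Suc d"] d assms by auto
      qed
    qed
  qed
  show ?thesis
  proof (cases "h \<le> j")
    case True then show ?thesis using up[rule_format, of "j - h"] assms by simp
  next
    case False then show ?thesis using down[rule_format, of "h - j"] assms by simp
  qed
qed

lemma comb:
  fixes \<tau> :: "nat \<Rightarrow> nat \<Rightarrow> nat \<Rightarrow> 'b::ab_group_add" and Z :: "'b set"
    and sc :: "real \<Rightarrow> 'b \<Rightarrow> 'b"
  assumes VS: "vector_space sc"
  assumes Z: "module.subspace sc Z"
  and A1: "\<And>i j k. i+j+k = m \<Longrightarrow> \<tau> i j k + \<tau> i k j \<in> Z"
  and A2: "\<And>i j k. i+j+k = m \<Longrightarrow> \<tau> i j k - \<tau> k i j \<in> Z"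
  and A3: "\<And>i j k. Suc (i+j+k) = m \<Longrightarrow> \<tau> (Suc i) j k + \<tau> i (Suc j) k + \<tau> i j (Suc k) \<in> Z"
  and A4: "\<And>i. 3*i+3 \<le> m \<Longrightarrow> odd (m - i) \<Longrightarrow> \<tau> i (Suc i) (m - 2*i - 1) \<in> Z"
  shows "i+j+k = m \<Longrightarrow> \<tau> i j k \<in> Z"
  using A1 A2 A3 A4
proof (induction m arbitrary: \<tau> i j k rule: less_induct)
  case (less m)
  interpret VS: vector_space sc by (rule VS)
  note A1 = less.prems(2) and A2 = less.prems(3) and A3 = less.prems(4) and A4 = less.prems(5)
  have zadd: "x + y \<in> Z" if "x \<in> Z" "y \<in> Z" for x y using Z that by (rule VS.subspace_add)
  have zdiff: "x - y \<in> Z" if "x \<in> Z" "y \<in> Z" for x y using Z that by (rule VS.subspace_diff)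
  have zl: "x \<in> Z" if "x + y \<in> Z" "y \<in> Z" for x y using zdiff[OF that] by simp
  have zr: "y \<in> Z" if "x + y \<in> Z" "x \<in> Z" for x y using zdiff[OF that] by simp
  have zm: "x \<in> Z" if "x - y \<in> Z" "y \<in> Z" for x y using zadd[OF that] by simp
  have zm': "y \<in> Z" if "x - y \<in> Z" "x \<in> Z" for x y using zdiff[OF that(2) that(1)] by simp
  have zhalf: "x \<in> Z" if "x + x \<in> Z" for x
  proof -
    have "sc (1/2) (x + x) \<in> Z" using Z that by (rule VS.subspace_scale)
    moreover have "sc (1/2) (x + x) = x"
      by (metis VS.scale_left_distrib VS.scale_one VS.scale_right_distrib field_sum_of_halves)
    ultimately show ?thesis by simp
  qed
  have D3: "\<tau> a b c + \<tau> b a c \<in> Z" if "a+b+c = m" for a b c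
  proof -
    have e1: "b + a + c = m" "c + b + a = m" "a + c + b = m" using that by simp_all
    have "(\<tau> b a c - \<tau> c b a) + (\<tau> c b a - \<tau> a c b) \<in> Z"
      by (rule zadd[OF A2[OF e1(1)] A2[OF e1(2)]])
    moreover have "(\<tau> b a c - \<tau> c b a) + (\<tau> c b a - \<tau> a c b) = \<tau> b a c - \<tau> a c b"
      by (rule gdd)
    ultimately have x: "\<tau> b a c - \<tau> a c b \<in> Z" by simp
    have "(\<tau> a b c + \<tau> a c b) + (\<tau> b a c - \<tau> a c b) \<in> Z" by (rule zadd[OF A1[OF that] x])
    moreover have "(\<tau> a b c + \<tau> a c b) + (\<tau> b a c - \<tau> a c b) = \<tau> a b c + \<tau> b a c"
      by (rule gdd2)
    ultimately show ?thesis by simp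
  qed
  have rep1: "\<tau> a a c \<in> Z" if "a+a+c = m" for a c using D3[OF that] zhalf by blast
  have rep2: "\<tau> a c c \<in> Z" if "a+c+c = m" for a c using A1[OF that] zhalf by blast
  have rep3: "\<tau> a c a \<in> Z" if "a+c+a = m" for a c
  proof -
    have "a + a + c = m" using that by simp
    then have "\<tau> a a c \<in> Z" by (rule rep1)
    then show ?thesis using A1[OF that] zl by blast
  qed
  have pos: "\<tau> i j k \<in> Z" if "i+j+k = m" "1 \<le> i" "1 \<le> j" "1 \<le> k" for i j k
  proof -
    let ?t = "\<lambda>a b c. \<tau> (Suc a) (Suc b) (Suc c)"
    have lt: "m - 3 < m" using that by simp
    have "?t (i - 1) (j - 1) (k - 1) \<in> Z"
    proof (rule less.IH[OF lt, of "i - 1" "j - 1" "k - 1" ?t])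
      show "i - 1 + (j - 1) + (k - 1) = m - 3" using that by simp
      show "?t a b c + ?t a c b \<in> Z" if "a + b + c = m - 3" for a b c
        using A1[of "Suc a" "Suc b" "Suc c"] that \<open>i+j+k = m\<close> \<open>1 \<le> i\<close> \<open>1 \<le> j\<close> \<open>1 \<le> k\<close> by simp
      show "?t a b c - ?t c a b \<in> Z" if "a + b + c = m - 3" for a b c
        using A2[of "Suc a" "Suc b" "Suc c"] that \<open>i+j+k = m\<close> \<open>1 \<le> i\<close> \<open>1 \<le> j\<close> \<open>1 \<le> k\<close> by simp
      show "?t (Suc a) b c + ?t a (Suc b) c + ?t a b (Suc c) \<in> Z" if "Suc (a + b + c) = m - 3" for a b c
        using A3[of "Suc a" "Suc b" "Suc c"] that \<open>i+j+k = m\<close> \<open>1 \<le> i\<close> \<open>1 \<le> j\<close> \<open>1 \<le> k\<close> by simp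
      show "?t a (Suc a) (m - 3 - 2 * a - 1) \<in> Z" if "3 * a + 3 \<le> m - 3" "odd (m - 3 - a)" for a
      proof -
        have e1: "Suc (m - 3 - 2 * a - 1) = m - 2 * Suc a - 1" using that by simp
        have e2: "m - Suc a = (m - 3 - a) + 2" using that by simp
        have "odd (m - Suc a)" using that(2) unfolding e2 by simp
        moreover have "3 * Suc a + 3 \<le> m" using that by simp
        ultimately show ?thesis using A4[of "Suc a"] unfolding e1 by simp
      qed
    qed
    then show ?thesis using that by simp
  qed
  have zero: "\<tau> 0 j (m - j) \<in> Z" if jm: "j \<le> m" for j
  proof (cases "m < 3")
    case True
    consider "j = 0" | "j = m" | "m = 2 \<and> j = 1" using True jm by linarith
    then show ?thesis
    proof cases
      case 1 then show ?thesis using rep1[of 0 m] by simp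
    next
      case 2 then show ?thesis using rep3[of 0 m] by simp
    next
      case 3 then show ?thesis using rep2[of 0 1] by simp
    qed
  next
    case False
    let ?P = "\<lambda>j. \<tau> 0 j (m - j) \<in> Z"
    have st: "?P j \<longleftrightarrow> ?P (Suc j)" if "1 \<le> j" "j < m - 1" for j
    proof -
      have s: "\<tau> 1 j (m - Suc j) + \<tau> 0 (Suc j) (m - Suc j) + \<tau> 0 j (Suc (m - Suc j)) \<in> Z"
        using A3[of 0 j "m - Suc j"] that by simp
      have p: "\<tau> 1 j (m - Suc j) \<in> Z" using pos[of 1 j "m - Suc j"] that by simp
      have e: "Suc (m - Suc j) = m - j" using that by simp
      have "\<tau> 0 (Suc j) (m - Suc j) + \<tau> 0 j (m - j) \<in> Z"
        using zr[of "\<tau> 1 j (m - Suc j)"] s p unfolding e by (simp add: add.assoc)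
      then show ?thesis using zl zr by blast
    qed
    have all: "?P j" if "1 \<le> j" "j \<le> m - 1" for j
    proof (cases "odd m")
      case True
      have "?P 1" using A4[of 0] True False by simp
      then show ?thesis by (rule nat_chain[of ?P 1 1 "m - 1"]) (use False st that in auto)
    next
      case False
      have h: "m - m div 2 = m div 2" using False by presburger
      have "0 + m div 2 + m div 2 = m" using False by presburger
      then have "?P (m div 2)" unfolding h by (rule rep2)
      then show ?thesis by (rule nat_chain[of ?P "m div 2" 1 "m - 1"]) (use False \<open>\<not> m < 3\<close> st that in auto)
    qed
    show ?thesis
    proof -
      consider "j = 0" | "j = m" | "1 \<le> j \<and> j \<le> m - 1" using jm by linarith
      then show ?thesis
      proof cases
        case 1 then show ?thesis using rep1[of 0 m] by simp
      next
        case 2 then show ?thesis using rep3[of 0 m] by simp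
      next
        case 3 then show ?thesis using all by blast
      qed
    qed
  qed
  show ?case
  proof -
    have s: "i + j + k = m" by (rule less.prems(1))
    consider "i = 0" | "j = 0" | "k = 0" | "1 \<le> i \<and> 1 \<le> j \<and> 1 \<le> k" by linarith
    then show ?thesis
    proof cases
      case 1
      have k: "k = m - j" using s 1 by simp
      have jm: "j \<le> m" using s by simp
      show ?thesis using zero[OF jm] 1 unfolding k by simp
    next
      case 2
      have a: "\<tau> i 0 k - \<tau> k i 0 \<in> Z" using A2[of i 0 k] s 2 by simp
      have b: "\<tau> k i 0 - \<tau> 0 k i \<in> Z" using A2[of k i 0] s 2 by simp
      have ie: "i = m - k" using s 2 by simp
      have km: "k \<le> m" using s by simp
      have c: "\<tau> 0 k i \<in> Z" using zero[OF km] unfolding ie .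
      show ?thesis using 2 zm[OF a zm[OF b c]] by simp
    next
      case 3
      have a: "\<tau> i j 0 - \<tau> 0 i j \<in> Z" using A2[of i j 0] s 3 by simp
      have je: "j = m - i" using s 3 by simp
      have im: "i \<le> m" using s by simp
      have c: "\<tau> 0 i j \<in> Z" using zero[OF im] unfolding je .
      show ?thesis using 3 zm[OF a c] by simp
    next
      case 4 then show ?thesis using pos s by blast
    qed
  qed
qed



section \<open>Homogeneity\<close>

definition hom :: "ncpoly \<Rightarrow> nat \<Rightarrow> nat \<Rightarrow> bool" where
  "hom p a b \<longleftrightarrow> (\<forall>w. p w \<noteq> 0 \<longrightarrow> nx w = a \<and> ny w = b)"

definition thom :: "tens2 \<Rightarrow> nat \<Rightarrow> nat \<Rightarrow> bool" where
  "thom t a b \<longleftrightarrow> (\<forall>u v. t (u, v) \<noteq> 0 \<longrightarrow> nx u + nx v = a \<and> ny u + ny v = b)"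

lemma nx_append[simp]: "nx (u @ v) = nx u + nx v" by (simp add: nx_def)
lemma ny_append[simp]: "ny (u @ v) = ny u + ny v" by (simp add: ny_def)
lemma length_nx_ny: "length w = nx w + ny w"
  unfolding nx_def ny_def by (induction w) auto

lemma hom_amul:
  assumes "hom p a b" "hom q c d" shows "hom (amul p q) (a + c) (b + d)"
  unfolding hom_def
proof (intro allI impI)
  fix w assume "amul p q w \<noteq> 0"
  have "\<exists>i\<in>{..length w}. p (take i w) * q (drop i w) \<noteq> 0"
  proof (rule ccontr)
    assume "\<not> ?thesis"
    then have "amul p q w = 0" unfolding amul_def by (intro sum.neutral) blast
    with \<open>amul p q w \<noteq> 0\<close> show False by simp
  qed
  then obtain i where "p (take i w) * q (drop i w) \<noteq> 0" by blast
  then have "p (take i w) \<noteq> 0" "q (drop i w) \<noteq> 0" by auto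
  then have "nx (take i w) = a" "ny (take i w) = b" "nx (drop i w) = c" "ny (drop i w) = d"
    using assms unfolding hom_def by auto
  moreover have "w = take i w @ drop i w" by simp
  ultimately show "nx w = a + c \<and> ny w = b + d"
    by (metis nx_append ny_append)
qed

lemma hom_diff: assumes "hom p a b" "hom q a b" shows "hom (p - q) a b"
  unfolding hom_def
proof (intro allI impI)
  fix w assume "(p - q) w \<noteq> 0"
  then have "p w \<noteq> 0 \<or> q w \<noteq> 0" by auto
  then show "nx w = a \<and> ny w = b" using assms unfolding hom_def by blast
qed
lemma hom_lbr: "hom p a b \<Longrightarrow> hom q c d \<Longrightarrow> hom (lbr p q) (a + c) (b + d)"
proof -
  assume h: "hom p a b" "hom q c d"
  have 1: "hom (amul p q) (a + c) (b + d)" using hom_amul[OF h] .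
  have "hom (amul q p) (c + a) (d + b)" using hom_amul[OF h(2) h(1)] .
  then have 2: "hom (amul q p) (a + c) (b + d)" by (simp add: ac_simps)
  show ?thesis unfolding lbr_def by (rule hom_diff[OF 1 2])
qed

lemma hom_letX: "hom letX 1 0" by (simp add: hom_def letX_def nx_def ny_def)
lemma hom_letY: "hom letY 0 1" by (simp add: hom_def letY_def nx_def ny_def)

lemma thom_tens: "hom p a b \<Longrightarrow> hom q c d \<Longrightarrow> thom (tens p q) (a + c) (b + d)"
  by (auto simp: hom_def thom_def tens_def)
lemma thom_diff: assumes "thom s a b" "thom t a b" shows "thom (s - t) a b"
  unfolding thom_def
proof (intro allI impI)
  fix u v assume "(s - t) (u, v) \<noteq> 0"
  then have "s (u, v) \<noteq> 0 \<or> t (u, v) \<noteq> 0" by auto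
  then show "nx u + nx v = a \<and> ny u + ny v = b" using assms unfolding thom_def by blast
qed

primrec xs :: "nat \<Rightarrow> ncpoly" where
  "xs 0 = letX"
| "xs (Suc i) = lbr letY (xs i)"

lemma xs_lie: "xs i \<in> freeLie"
  by (induction i) (auto intro: freeLie.intros)

lemma hom_xs: "hom (xs i) 1 i"
proof (induction i)
  case 0 then show ?case using hom_letX by simp
next
  case (Suc i) then show ?case using hom_lbr[OF hom_letY Suc] by simp
qed

section \<open>Lie monomials\<close>

inductive mon :: "ncpoly \<Rightarrow> nat \<Rightarrow> nat \<Rightarrow> bool" where
  mx: "mon letX 1 0"
| my: "mon letY 0 1"
| mb: "mon a p q \<Longrightarrow> mon b p' q' \<Longrightarrow> mon (lbr a b) (p + p') (q + q')"

lemma mon_hom: "mon a p q \<Longrightarrow> hom a p q"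
proof (induction rule: mon.induct)
  case mx then show ?case by (rule hom_letX)
next
  case my then show ?case by (rule hom_letY)
next
  case (mb a p q b p' q') show ?case by (rule hom_lbr[OF mb.IH])
qed

lemma freeLie_span: "a \<in> freeLie \<Longrightarrow> a \<in> VA.span {a. \<exists>p q. mon a p q}"
proof (induction rule: freeLie.induct)
  case gen_x then show ?case using mon.mx by (blast intro: VA.span_base)
next
  case gen_y then show ?case using mon.my by (blast intro: VA.span_base)
next
  case zero then show ?case by (rule VA.span_zero)
next
  case (add a b) then show ?case by (intro VA.span_add add.IH)
next
  case (scale a c) then show ?case by (intro VA.span_scale scale.IH)
next
  case (bracket a b)
  have "lbr a b \<in> VA.span {lbr u v | u v. u \<in> {a. \<exists>p q. mon a p q} \<and> v \<in> {a. \<exists>p q. mon a p q}}"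
    using lbr_span[OF bracket.IH] .
  also have "\<dots> \<subseteq> VA.span {a. \<exists>p q. mon a p q}"
    by (rule VA.span_mono) (blast intro: mon.mb)
  finally show ?case .
qed

lemma LtensL_span:
  "LtensL \<subseteq> VT.span {tens a b | a b. (\<exists>p q. mon a p q) \<and> (\<exists>p q. mon b p q)}"
proof -
  have "{tens a b | a b. a \<in> freeLie \<and> b \<in> freeLie} \<subseteq> VT.span {tens a b | a b. (\<exists>p q. mon a p q) \<and> (\<exists>p q. mon b p q)}"
  proof clarify
    fix a b assume "a \<in> freeLie" "b \<in> freeLie"
    then have "tens a b \<in> VT.span {tens u v | u v. u \<in> {a. \<exists>p q. mon a p q} \<and> v \<in> {a. \<exists>p q. mon a p q}}"
      by (intro tens_span freeLie_span)
    then show "tens a b \<in> VT.span {tens a b | a b. (\<exists>p q. mon a p q) \<and> (\<exists>p q. mon b p q)}"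
      by simp
  qed
  then show ?thesis unfolding LtensL_def
    by (intro VT.span_minimal VT.subspace_span)
qed

section \<open>Projection to a bidegree\<close>

lemma span_proj:
  assumes G: "\<And>d g. g \<in> Gs d \<Longrightarrow> thom g (fst d) (snd d)"
    and t: "t \<in> VT.span (\<Union>d. Gs d)" and th: "thom t a b"
  shows "t \<in> VT.span (Gs (a, b))"
proof -
  obtain F r where F: "finite F" "F \<subseteq> (\<Union>d. Gs d)" and te: "t = (\<Sum>g\<in>F. tscale (r g) g)"
    using t unfolding VT.span_explicit by blast
  let ?F1 = "F \<inter> Gs (a, b)"
  define t' where "t' = (\<Sum>g\<in>?F1. tscale (r g) g)"
  have t'in: "t' \<in> VT.span (Gs (a, b))"
    unfolding t'_def by (intro VT.span_sum VT.span_scale VT.span_base) auto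
  have "t uv = t' uv" for uv
  proof (cases uv)
    case (Pair u v)
    have tv: "t (u, v) = (\<Sum>g\<in>F. r g * g (u, v))"
      by (simp add: te fun_sum_apply tscale_def)
    have tv': "t' (u, v) = (\<Sum>g\<in>?F1. r g * g (u, v))"
      by (simp add: t'_def fun_sum_apply tscale_def)
    show ?thesis
    proof (cases "nx u + nx v = a \<and> ny u + ny v = b")
      case True
      have "(\<Sum>g\<in>F. r g * g (u, v)) = (\<Sum>g\<in>?F1. r g * g (u, v))"
      proof (rule sum.mono_neutral_right)
        show "finite F" by fact
        show "?F1 \<subseteq> F" by blast
        show "\<forall>g\<in>F - ?F1. r g * g (u, v) = 0"
        proof
          fix g assume g: "g \<in> F - ?F1"
          then obtain d where d: "g \<in> Gs d" using F by blast
          with g have "d \<noteq> (a, b)" by auto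
          then have "g (u, v) = 0" using G[OF d] True unfolding thom_def
            by (metis prod.collapse)
          then show "r g * g (u, v) = 0" by simp
        qed
      qed
      then show ?thesis using Pair tv tv' by simp
    next
      case False
      have "t (u, v) = 0" using th False unfolding thom_def by blast
      moreover have "t' (u, v) = 0" unfolding tv'
      proof (rule sum.neutral, rule ballI)
        fix g assume "g \<in> ?F1"
        then have "thom g a b" using G[of g "(a, b)"] by simp
        then have "g (u, v) = 0" using False unfolding thom_def by blast
        then show "r g * g (u, v) = 0" by simp
      qed
      ultimately show ?thesis using Pair by simp
    qed
  qed
  then have "t = t'" by auto
  then show ?thesis using t'in by simp
qed

definition Gs :: "nat \<times> nat \<Rightarrow> tens2 set" where
  "Gs d = {tens a b | a b p1 q1 p2 q2. mon a p1 q1 \<and> mon b p2 q2 \<and> p1 + p2 = fst d \<and> q1 + q2 = snd d}"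

lemma B_span: "t \<in> LtensL_bideg p q \<Longrightarrow> t \<in> VT.span (Gs (p, q))"
proof -
  assume t: "t \<in> LtensL_bideg p q"
  have G: "thom g (fst d) (snd d)" if "g \<in> Gs d" for d g
  proof -
    have "\<exists>a b p1 q1 p2 q2. g = tens a b \<and> mon a p1 q1 \<and> mon b p2 q2 \<and>
      p1 + p2 = fst d \<and> q1 + q2 = snd d"
      using that unfolding Gs_def by blast
    then obtain a b p1 q1 p2 q2 where g: "g = tens a b" "mon a p1 q1" "mon b p2 q2"
      "p1 + p2 = fst d" "q1 + q2 = snd d" by blast
    show ?thesis using thom_tens[OF mon_hom[OF g(2)] mon_hom[OF g(3)]] g by simp
  qed
  have "\<Union>(range Gs) = {tens a b | a b. (\<exists>p q. mon a p q) \<and> (\<exists>p q. mon b p q)}"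
    unfolding Gs_def by fastforce
  then have "t \<in> VT.span (\<Union>d. Gs d)" using t LtensL_span unfolding LtensL_bideg_def by auto
  moreover have "thom t p q" using t unfolding LtensL_bideg_def thom_def by blast
  ultimately show ?thesis using span_proj[OF G] by blast
qed



lemma gl3: "(x::'a::ab_group_add) + y - (- z) = z + x + y" by (simp add: algebra_simps)

definition gens :: "nat \<Rightarrow> nat \<Rightarrow> ncpoly set" where
  "gens p q = (if p = 0 then (if q = 1 then {letY} else {})
    else if p = 1 then {xs q}
    else if p = 2 then {lbr (xs i) (xs j) | i j. i + j = q}
    else if p = 3 then {lbr (xs i) (lbr (xs j) (xs k)) | i j k. i + j + k = q}
    else UNIV)"

lemma gens0: "u \<in> gens 0 q \<longleftrightarrow> q = 1 \<and> u = letY" by (auto simp: gens_def)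
lemma gens1: "u \<in> gens 1 q \<longleftrightarrow> u = xs q" by (auto simp: gens_def)
lemma gens2: "u \<in> gens 2 q \<longleftrightarrow> (\<exists>i j. u = lbr (xs i) (xs j) \<and> i + j = q)" by (auto simp: gens_def)
lemma gens3: "u \<in> gens 3 q \<longleftrightarrow> (\<exists>i j k. u = lbr (xs i) (lbr (xs j) (xs k)) \<and> i + j + k = q)"
  by (auto simp: gens_def)
lemma gens4: "p \<ge> 4 \<Longrightarrow> gens p q = UNIV" by (auto simp: gens_def)

lemma ly: "lbr letY (xs i) = xs (Suc i)" by simp
declare xs.simps(2)[simp del]
lemma lyx: "lbr (xs i) letY = - xs (Suc i)" unfolding ly[symmetric] by (rule lbr_antisym)

lemma jac2: "lbr letY (lbr (xs i) (xs j)) = lbr (xs (Suc i)) (xs j) + lbr (xs i) (xs (Suc j))"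
  using lbr_jacobi[of letY "xs i" "xs j"] by (simp only: ly)

lemma jac3: "lbr letY (lbr (xs i) (lbr (xs j) (xs k))) =
   lbr (xs (Suc i)) (lbr (xs j) (xs k)) + (lbr (xs i) (lbr (xs (Suc j)) (xs k)) + lbr (xs i) (lbr (xs j) (xs (Suc k))))"
  using lbr_jacobi[of letY "xs i" "lbr (xs j) (xs k)"] by (simp only: ly jac2 lbr_add_right)

lemma lbr_gens:
  assumes u: "u \<in> gens p q" and v: "v \<in> gens p' q'" and le: "p + p' \<le> 3"
  shows "lbr u v \<in> VA.span (gens (p + p') (q + q'))"
proof -
  have p4: "p = 0 \<or> p = 1 \<or> p = 2 \<or> p = 3" using le by linarith
  have p4': "p' = 0 \<or> p' = 1 \<or> p' = 2 \<or> p' = 3" using le by linarith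
  have c02: "lbr letY w \<in> VA.span (gens 2 (1 + r))" if wg: "w \<in> gens 2 r" for w r
  proof -
    obtain i j where w: "w = lbr (xs i) (xs j)" "i + j = r" using wg[unfolded gens2] by blast
    have "lbr (xs (Suc i)) (xs j) \<in> gens 2 (1 + r)" unfolding gens2
      by (rule exI[of _ "Suc i"], rule exI[of _ j]) (use w in simp)
    moreover have "lbr (xs i) (xs (Suc j)) \<in> gens 2 (1 + r)" unfolding gens2
      by (rule exI[of _ i], rule exI[of _ "Suc j"]) (use w in simp)
    ultimately show ?thesis unfolding w jac2 by (intro VA.span_add VA.span_base)
  qed
  have c03: "lbr letY w \<in> VA.span (gens 3 (1 + r))" if wg: "w \<in> gens 3 r" for w r
  proof -
    obtain i j k where w: "w = lbr (xs i) (lbr (xs j) (xs k))" "i + j + k = r" using wg[unfolded gens3] by blast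
    have "lbr (xs (Suc i)) (lbr (xs j) (xs k)) \<in> gens 3 (1 + r)" unfolding gens3
      by (rule exI[of _ "Suc i"], rule exI[of _ j], rule exI[of _ k]) (use w in simp)
    moreover have "lbr (xs i) (lbr (xs (Suc j)) (xs k)) \<in> gens 3 (1 + r)" unfolding gens3
      by (rule exI[of _ i], rule exI[of _ "Suc j"], rule exI[of _ k]) (use w in simp)
    moreover have "lbr (xs i) (lbr (xs j) (xs (Suc k))) \<in> gens 3 (1 + r)" unfolding gens3
      by (rule exI[of _ i], rule exI[of _ j], rule exI[of _ "Suc k"]) (use w in simp)
    ultimately show ?thesis unfolding w jac3 by (intro VA.span_add VA.span_base)
  qed
  have c12: "lbr w w' \<in> gens 3 (r + r')" if wg: "w \<in> gens 1 r" "w' \<in> gens 2 r'" for w w' r r'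
  proof -
    obtain i j where w': "w' = lbr (xs i) (xs j)" "i + j = r'" using wg(2)[unfolded gens2] by blast
    have w: "w = xs r" using wg(1)[unfolded gens1] .
    show ?thesis unfolding w w' gens3
      by (rule exI[of _ r], rule exI[of _ i], rule exI[of _ j]) (use w' in simp)
  qed
  have h00: ?thesis if "p = 0" "p' = 0"
  proof -
    have "u = letY" "v = letY" using u v that gens0 by auto
    then have "lbr u v = 0" by simp
    then show ?thesis by (simp add: VA.span_zero)
  qed
  have h01: ?thesis if "p = 0" "p' = 1"
  proof -
    have "u = letY" "q = 1" "v = xs q'" using u v that gens0 gens1 by auto
    then have e: "lbr u v = xs (1 + q')" "p + p' = 1" "q + q' = 1 + q'" using that by (simp_all add: ly)
    have "xs (1 + q') \<in> gens 1 (1 + q')" unfolding gens1 ..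
    then show ?thesis unfolding e by (rule VA.span_base)
  qed
  have h10: ?thesis if "p = 1" "p' = 0"
  proof -
    have "v = letY" "q' = 1" "u = xs q" using u v that gens0 gens1 by auto
    then have e: "lbr u v = - xs (1 + q)" "p + p' = 1" "q + q' = 1 + q" using that by (simp_all add: lyx)
    have "xs (1 + q) \<in> gens 1 (1 + q)" unfolding gens1 ..
    then show ?thesis unfolding e by (intro VA.span_neg VA.span_base)
  qed
  have h02: ?thesis if "p = 0" "p' = 2"
  proof -
    have "u = letY" "q = 1" using u that gens0 by auto
    then have e: "lbr u v = lbr letY v" "p + p' = 2" "q + q' = 1 + q'" using that by simp_all
    have "v \<in> gens 2 q'" using v that by simp
    then show ?thesis unfolding e by (rule c02)
  qed
  have h20: ?thesis if "p = 2" "p' = 0"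
  proof -
    have "v = letY" "q' = 1" using v that gens0 by auto
    then have e: "lbr u v = - lbr letY u" "p + p' = 2" "q + q' = 1 + q" using that lbr_antisym[of u v]
      by simp_all
    have "u \<in> gens 2 q" using u that by simp
    then show ?thesis unfolding e by (intro VA.span_neg c02)
  qed
  have h11: ?thesis if "p = 1" "p' = 1"
  proof -
    have "u = xs q" "v = xs q'" using u v that gens1 by auto
    then have "lbr u v \<in> gens 2 (q + q')" unfolding gens2
      by (intro exI[of _ q] exI[of _ q']) simp
    moreover have "p + p' = 2" using that by simp
    ultimately show ?thesis by (simp add: VA.span_base)
  qed
  have h03: ?thesis if "p = 0" "p' = 3"
  proof -
    have "u = letY" "q = 1" using u that gens0 by auto
    then have e: "lbr u v = lbr letY v" "p + p' = 3" "q + q' = 1 + q'" using that by simp_all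
    have "v \<in> gens 3 q'" using v that by simp
    then show ?thesis unfolding e by (rule c03)
  qed
  have h30: ?thesis if "p = 3" "p' = 0"
  proof -
    have "v = letY" "q' = 1" using v that gens0 by auto
    then have e: "lbr u v = - lbr letY u" "p + p' = 3" "q + q' = 1 + q" using that lbr_antisym[of u v]
      by simp_all
    have "u \<in> gens 3 q" using u that by simp
    then show ?thesis unfolding e by (intro VA.span_neg c03)
  qed
  have h12: ?thesis if "p = 1" "p' = 2"
  proof -
    have "u \<in> gens 1 q" "v \<in> gens 2 q'" using u v that by simp_all
    then have "lbr u v \<in> gens 3 (q + q')" by (rule c12)
    moreover have "p + p' = 3" using that by simp
    ultimately show ?thesis by (simp add: VA.span_base)
  qed
  have h21: ?thesis if "p = 2" "p' = 1"
  proof -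
    have "v \<in> gens 1 q'" "u \<in> gens 2 q" using u v that by simp_all
    then have "lbr v u \<in> gens 3 (q' + q)" by (rule c12)
    then have "- lbr v u \<in> VA.span (gens 3 (q + q'))" by (simp add: add.commute VA.span_neg VA.span_base)
    moreover have "p + p' = 3" using that by simp
    moreover have "lbr u v = - lbr v u" by (rule lbr_antisym)
    ultimately show ?thesis by simp
  qed
  show ?thesis
    using p4 p4'
  proof (elim disjE)
    assume "p = 0" "p' = 0" then show ?thesis by (rule h00)
  next
    assume "p = 0" "p' = 1" then show ?thesis by (rule h01)
  next
    assume "p = 0" "p' = 2" then show ?thesis by (rule h02)
  next
    assume "p = 0" "p' = 3" then show ?thesis by (rule h03)
  next
    assume "p = 1" "p' = 0" then show ?thesis by (rule h10)
  next
    assume "p = 1" "p' = 1" then show ?thesis by (rule h11)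
  next
    assume "p = 1" "p' = 2" then show ?thesis by (rule h12)
  next
    assume "p = 1" "p' = 3" then show ?thesis using le by simp
  next
    assume "p = 2" "p' = 0" then show ?thesis by (rule h20)
  next
    assume "p = 2" "p' = 1" then show ?thesis by (rule h21)
  next
    assume "p = 2" "p' = 2" then show ?thesis using le by simp
  next
    assume "p = 2" "p' = 3" then show ?thesis using le by simp
  next
    assume "p = 3" "p' = 0" then show ?thesis by (rule h30)
  next
    assume "p = 3" "p' = 1" then show ?thesis using le by simp
  next
    assume "p = 3" "p' = 2" then show ?thesis using le by simp
  next
    assume "p = 3" "p' = 3" then show ?thesis using le by simp
  qed
qed

lemma mon_gens: "mon a p q \<Longrightarrow> a \<in> VA.span (gens p q)"
proof (induction rule: mon.induct)
  case mx
  have "letX \<in> gens 1 0" using gens1[of letX 0] by simp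
  then show ?case by (rule VA.span_base)
next
  case my
  have "letY \<in> gens 0 1" using gens0 by simp
  then show ?case by (rule VA.span_base)
next
  case (mb a p q b p' q')
  show ?case
  proof (cases "p + p' \<le> 3")
    case True
    have "lbr a b \<in> VA.span {lbr u v | u v. u \<in> gens p q \<and> v \<in> gens p' q'}"
      by (rule lbr_span[OF mb.IH])
    also have "\<dots> \<subseteq> VA.span (gens (p + p') (q + q'))"
      by (intro VA.span_minimal VA.subspace_span) (use lbr_gens True in blast)
    finally show ?thesis .
  next
    case False
    then show ?thesis by (simp add: gens4 VA.span_base)
  qed
qed

lemma gens_lie: "p \<le> 3 \<Longrightarrow> u \<in> gens p q \<Longrightarrow> u \<in> freeLie \<and> hom u p q"
proof -
  assume p: "p \<le> 3" and u: "u \<in> gens p q"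
  have "p = 0 \<or> p = 1 \<or> p = 2 \<or> p = 3" using p by auto
  then show ?thesis
  proof (elim disjE)
    assume "p = 0" then show ?thesis using u gens0 hom_letY by (auto intro: freeLie.intros)
  next
    assume "p = 1" then show ?thesis using u gens1 hom_xs xs_lie by auto
  next
    assume "p = 2"
    then obtain i j where "u = lbr (xs i) (xs j)" "i + j = q" using u gens2 by blast
    moreover have "hom (lbr (xs i) (xs j)) 2 (i + j)"
      using hom_lbr[OF hom_xs hom_xs, of i j] unfolding one_add_one .
    ultimately show ?thesis using \<open>p = 2\<close> by (auto intro: freeLie.bracket xs_lie)
  next
    assume "p = 3"
    then obtain i j k where "u = lbr (xs i) (lbr (xs j) (xs k))" "i + j + k = q" using u gens3 by blast
    moreover have e: "(1::nat) + (1 + 1) = 3" by simp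
    moreover have "hom (lbr (xs i) (lbr (xs j) (xs k))) 3 (i + j + k)"
      using hom_lbr[OF hom_xs hom_lbr[OF hom_xs hom_xs], of i j k] unfolding e by (simp add: add.assoc)
    ultimately show ?thesis using \<open>p = 3\<close> by (auto intro!: freeLie.bracket xs_lie)
  qed
qed

section \<open>Relations\<close>

lemma tens_B: "a \<in> freeLie \<Longrightarrow> b \<in> freeLie \<Longrightarrow> hom a p q \<Longrightarrow> hom b p' q' \<Longrightarrow>
  p + p' = P \<Longrightarrow> q + q' = Q \<Longrightarrow> tens a b \<in> LtensL_bideg P Q"
  unfolding LtensL_bideg_def LtensL_def
  using thom_tens[of a p q b p' q'] by (auto simp: thom_def intro!: VT.span_base)

lemma relS:
  assumes "a \<in> freeLie" "b \<in> freeLie" "hom a p q" "hom b p' q'" "p + p' = P" "q + q' = Q"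
  shows "tens a b - tens b a \<in> LtensL_bideg P Q \<inter> RelF"
proof -
  have 1: "tens a b \<in> LtensL_bideg P Q" using tens_B assms by blast
  have 2: "tens b a \<in> LtensL_bideg P Q" using tens_B[of b a p' q' p q] assms by simp
  have "tens a b - tens b a \<in> LtensL" using 1 2 unfolding LtensL_bideg_def
    by (auto intro: VT.span_diff simp: LtensL_def)
  moreover have "thom (tens a b - tens b a) P Q"
    using 1 2 unfolding LtensL_bideg_def by (intro thom_diff) (auto simp: thom_def)
  moreover have "tens a b - tens b a \<in> RelF" unfolding RelF_def
    using assms by (intro VT.span_base) blast
  ultimately show ?thesis unfolding LtensL_bideg_def thom_def by blast
qed

lemma relI:
  assumes "a \<in> freeLie" "b \<in> freeLie" "c \<in> freeLie" "hom a p1 q1" "hom b p2 q2" "hom c p3 q3"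
    "p1 + p2 + p3 = P" "q1 + q2 + q3 = Q"
  shows "tens a (lbr b c) - tens (lbr a b) c \<in> LtensL_bideg P Q \<inter> RelF"
proof -
  have 1: "tens a (lbr b c) \<in> LtensL_bideg P Q"
    using tens_B[OF assms(1) freeLie.bracket[OF assms(2,3)] assms(4) hom_lbr[OF assms(5,6)]] assms(7,8)
    by (simp add: add.assoc)
  have 2: "tens (lbr a b) c \<in> LtensL_bideg P Q"
    using tens_B[OF freeLie.bracket[OF assms(1,2)] assms(3) hom_lbr[OF assms(4,5)] assms(6)] assms(7,8)
    by simp
  have "tens a (lbr b c) - tens (lbr a b) c \<in> LtensL" using 1 2 unfolding LtensL_bideg_def
    by (auto intro: VT.span_diff simp: LtensL_def)
  moreover have "thom (tens a (lbr b c) - tens (lbr a b) c) P Q"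
    using 1 2 unfolding LtensL_bideg_def by (intro thom_diff) (auto simp: thom_def)
  moreover have "tens a (lbr b c) - tens (lbr a b) c \<in> RelF" unfolding RelF_def
    using assms(1-3) by (intro VT.span_base) blast
  ultimately show ?thesis unfolding LtensL_bideg_def thom_def by blast
qed



definition tau :: "nat \<Rightarrow> nat \<Rightarrow> nat \<Rightarrow> tens2" where
  "tau i j k = tens (xs i) (lbr (xs j) (xs k))"
definition BR :: "nat \<Rightarrow> tens2 set" where "BR m = LtensL_bideg 3 m \<inter> RelF"
definition Zp :: "nat \<Rightarrow> tens2 set" where
  "Zp m = VT.span ({tau i j k | i j k. i + j + k = m} \<union> BR m)"
definition eI :: "nat \<Rightarrow> nat \<Rightarrow> tens2" where "eI m i = tau i (Suc i) (m - 2 * i - 1)"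
definition Iset :: "nat \<Rightarrow> nat set" where "Iset m = {i. 3 * i + 3 \<le> m \<and> odd (m - i)}"
definition Zpp :: "nat \<Rightarrow> tens2 set" where "Zpp m = VT.span (eI m ` Iset m \<union> BR m)"

lemma gsplit: "(x::'a::ab_group_add) = (x - y) + y" by simp

lemma lie2: "lbr (xs j) (xs k) \<in> freeLie" by (intro freeLie.bracket xs_lie)
lemma hom2: "hom (lbr (xs j) (xs k)) 2 (j + k)"
  using hom_lbr[OF hom_xs hom_xs, of j k] unfolding one_add_one .

lemma zp_add: "x \<in> Zp m \<Longrightarrow> y \<in> Zp m \<Longrightarrow> x + y \<in> Zp m"
  unfolding Zp_def by (rule VT.span_add)
lemma zpp_add: "x \<in> Zpp m \<Longrightarrow> y \<in> Zpp m \<Longrightarrow> x + y \<in> Zpp m"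
  unfolding Zpp_def by (rule VT.span_add)

lemma tau_B: "i + j + k = m \<Longrightarrow> tau i j k \<in> LtensL_bideg 3 m"
  unfolding tau_def by (rule tens_B[OF xs_lie lie2 hom_xs hom2]) auto

lemma tens_gens:
  assumes u: "u \<in> gens p q" and v: "v \<in> gens p' q'" and pp: "p + p' = 3" and qq: "q + q' = m"
  shows "tens u v \<in> Zp m"
proof -
  have A12: "tens u v \<in> Zp m" if H: "u \<in> gens 1 q" "v \<in> gens 2 q'" "q + q' = m" for u v q q'
  proof -
    obtain j k where v: "v = lbr (xs j) (xs k)" "j + k = q'" using H(2)[unfolded gens2] by blast
    have u: "u = xs q" using H(1)[unfolded gens1] .
    have "tens u v = tau q j k" unfolding u v tau_def ..
    moreover have "q + j + k = m" using v H by simp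
    ultimately show ?thesis unfolding Zp_def by (intro VT.span_base) blast
  qed
  have A03: "tens u v \<in> Zp m" if H: "u \<in> gens 0 q" "v \<in> gens 3 q'" "q + q' = m" for u v q q'
  proof -
    obtain i j k where v: "v = lbr (xs i) (lbr (xs j) (xs k))" "i + j + k = q'"
      using H(2)[unfolded gens3] by blast
    have u: "u = letY" "q = 1" using H(1)[unfolded gens0] by auto
    let ?c = "lbr (xs j) (xs k)"
    have d: "tens letY (lbr (xs i) ?c) - tens (lbr letY (xs i)) ?c \<in> BR m"
      unfolding BR_def
      by (rule relI[OF freeLie.gen_y xs_lie lie2 hom_letY hom_xs hom2]) (use v u H in auto)
    have t: "tens (lbr letY (xs i)) ?c = tau (Suc i) j k" unfolding ly tau_def ..
    have "Suc i + j + k = m" using v u H by simp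
    then have z1: "tau (Suc i) j k \<in> Zp m" unfolding Zp_def by (intro VT.span_base) blast
    have z2: "tens letY (lbr (xs i) ?c) - tens (lbr letY (xs i)) ?c \<in> Zp m"
      using d unfolding Zp_def by (intro VT.span_base) blast
    have "(tens letY (lbr (xs i) ?c) - tens (lbr letY (xs i)) ?c) + tens (lbr letY (xs i)) ?c \<in> Zp m"
      unfolding t by (rule zp_add[OF z2[unfolded t] z1])
    then show ?thesis unfolding u v by simp
  qed
  have swap: "tens u v \<in> Zp m" if "tens v u \<in> Zp m" "u \<in> gens p q" "v \<in> gens p' q'"
      "p \<le> 3" "p' \<le> 3" "p + p' = 3" "q + q' = m" for u v p q p' q'
  proof -
    have "tens u v - tens v u \<in> BR m" unfolding BR_def
      using gens_lie[OF that(4,2)] gens_lie[OF that(5,3)] that(6,7) by (intro relS) auto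
    then have "tens u v - tens v u \<in> Zp m" unfolding Zp_def by (intro VT.span_base) blast
    then have "(tens u v - tens v u) + tens v u \<in> Zp m" using that(1) by (rule zp_add)
    then show ?thesis by simp
  qed
  have "p = 0 \<or> p = 1 \<or> p = 2 \<or> p = 3" using pp by auto
  then show ?thesis
  proof (elim disjE)
    assume "p = 0" then show ?thesis using A03 u v pp qq by simp
  next
    assume "p = 1" then show ?thesis using A12 u v pp qq by simp
  next
    assume p: "p = 2"
    then have "tens v u \<in> Zp m" using A12[of v q' u q] u v pp qq by simp
    then show ?thesis by (rule swap[OF _ u v]) (use p pp qq in auto)
  next
    assume p: "p = 3"
    then have "tens v u \<in> Zp m" using A03[of v q' u q] u v pp qq by simp
    then show ?thesis by (rule swap[OF _ u v]) (use p pp qq in auto)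
  qed
qed

lemma B_sub_Zp: "LtensL_bideg 3 m \<subseteq> Zp m"
proof
  fix t assume t: "t \<in> LtensL_bideg 3 m"
  have "Gs (3, m) \<subseteq> Zp m"
  proof
    fix g assume "g \<in> Gs (3, m)"
    then obtain a b p1 q1 p2 q2 where g: "g = tens a b" "mon a p1 q1" "mon b p2 q2"
      "p1 + p2 = 3" "q1 + q2 = m" unfolding Gs_def by auto
    have "tens a b \<in> VT.span {tens u v | u v. u \<in> gens p1 q1 \<and> v \<in> gens p2 q2}"
      by (rule tens_span[OF mon_gens[OF g(2)] mon_gens[OF g(3)]])
    also have "\<dots> \<subseteq> Zp m"
      unfolding Zp_def
    proof (rule VT.span_minimal[OF _ VT.subspace_span])
      show "{tens u v | u v. u \<in> gens p1 q1 \<and> v \<in> gens p2 q2} \<subseteq>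
        VT.span ({tau i j k | i j k. i + j + k = m} \<union> BR m)"
        using tens_gens[OF _ _ g(4) g(5)] unfolding Zp_def by blast
    qed
    finally show "g \<in> Zp m" using g by simp
  qed
  then have "VT.span (Gs (3, m)) \<subseteq> Zp m"
    unfolding Zp_def by (intro VT.span_minimal VT.subspace_span) (simp add: Zp_def)
  then show "t \<in> Zp m" using B_span[OF t] by blast
qed

lemma tau_Zpp: "i + j + k = m \<Longrightarrow> tau i j k \<in> Zpp m"
proof (rule comb[OF vs_t VT.subspace_span, of m tau "eI m ` Iset m \<union> BR m", folded Zpp_def])
  have brz: "x \<in> Zpp m" if "x \<in> BR m" for x
    using that unfolding Zpp_def by (intro VT.span_base) blast
  show "tau i j k + tau i k j \<in> Zpp m" if "i + j + k = m" for i j k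
  proof -
    have "lbr (xs j) (xs k) + lbr (xs k) (xs j) = 0"
      using lbr_antisym[of "xs j" "xs k"] by (metis add.left_inverse)
    then have "tau i j k + tau i k j = 0" unfolding tau_def tens_add_right[symmetric] by simp
    then show ?thesis unfolding Zpp_def by (simp add: VT.span_zero)
  qed
  show "tau i j k - tau k i j \<in> Zpp m" if s: "i + j + k = m" for i j k
  proof -
    have 1: "tens (xs i) (lbr (xs j) (xs k)) - tens (lbr (xs i) (xs j)) (xs k) \<in> BR m"
      unfolding BR_def by (rule relI[OF xs_lie xs_lie xs_lie hom_xs hom_xs hom_xs]) (use s in auto)
    have 2: "tens (lbr (xs i) (xs j)) (xs k) - tens (xs k) (lbr (xs i) (xs j)) \<in> BR m"
      unfolding BR_def by (rule relS[OF lie2 xs_lie hom2 hom_xs]) (use s in auto)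
    have "(tens (xs i) (lbr (xs j) (xs k)) - tens (lbr (xs i) (xs j)) (xs k)) +
          (tens (lbr (xs i) (xs j)) (xs k) - tens (xs k) (lbr (xs i) (xs j))) \<in> Zpp m"
      by (rule zpp_add[OF brz[OF 1] brz[OF 2]])
    then show ?thesis unfolding tau_def gdd .
  qed
  show "tau (Suc i) j k + tau i (Suc j) k + tau i j (Suc k) \<in> Zpp m" if s: "Suc (i + j + k) = m" for i j k
  proof -
    have 1: "tens (xs i) (lbr letY (lbr (xs j) (xs k))) - tens (lbr (xs i) letY) (lbr (xs j) (xs k)) \<in> BR m"
      unfolding BR_def by (rule relI[OF xs_lie freeLie.gen_y lie2 hom_xs hom_letY hom2]) (use s in auto)
    have a: "tens (xs i) (lbr letY (lbr (xs j) (xs k))) = tau i (Suc j) k + tau i j (Suc k)"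
      unfolding jac2 tens_add_right tau_def ..
    have b: "tens (lbr (xs i) letY) (lbr (xs j) (xs k)) = - tau (Suc i) j k"
      unfolding lyx tens_minus_left tau_def ..
    have "tau (Suc i) j k + tau i (Suc j) k + tau i j (Suc k) =
      tens (xs i) (lbr letY (lbr (xs j) (xs k))) - tens (lbr (xs i) letY) (lbr (xs j) (xs k))"
      unfolding a b gl3 ..
    then show ?thesis using brz[OF 1] by simp
  qed
  show "tau i (Suc i) (m - 2 * i - 1) \<in> Zpp m" if "3 * i + 3 \<le> m" "odd (m - i)" for i
    using that unfolding Zpp_def eI_def[symmetric] Iset_def by (intro VT.span_base) blast
qed

lemma B_sub: "LtensL_bideg 3 m \<subseteq> Zpp m"
proof -
  have "Zp m \<subseteq> Zpp m" unfolding Zp_def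
  proof (rule VT.span_minimal)
    show "{tau i j k | i j k. i + j + k = m} \<union> BR m \<subseteq> Zpp m"
      using tau_Zpp unfolding Zpp_def by (auto intro: VT.span_base)
    show "VT.subspace (Zpp m)" unfolding Zpp_def by (rule VT.subspace_span)
  qed
  then show ?thesis using B_sub_Zp by blast
qed

lemma eI_B: "i \<in> Iset m \<Longrightarrow> eI m i \<in> LtensL_bideg 3 m"
  unfolding eI_def Iset_def by (rule tau_B) auto



section \<open>A matrix representation\<close>

datatype t3 = T1 | T2 | T3

lemma UNIV_t3: "(UNIV :: t3 set) = {T1, T2, T3}"
  using t3.exhaust by auto

instance t3 :: finite
  by standard (simp add: UNIV_t3)

lemma sum_t3: "sum f (UNIV :: t3 set) = f T1 + f T2 + f T3"
  by (simp add: UNIV_t3 add.assoc)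

definition pv :: "real \<Rightarrow> t3 \<Rightarrow> real" where
  "pv s r = (case r of T1 \<Rightarrow> s + 1 | T2 \<Rightarrow> 1 | T3 \<Rightarrow> 0)"
fun nxt :: "t3 \<Rightarrow> t3" where
  "nxt T1 = T2" | "nxt T2 = T3" | "nxt T3 = T1"
definition dd :: "real \<Rightarrow> t3 \<Rightarrow> real" where "dd s r = pv s r - pv s (nxt r)"

lemma nxt3: "nxt (nxt (nxt r)) = r"
  by (cases r) simp_all

lemma dd_simps[simp]: "dd s T1 = s" "dd s T2 = 1" "dd s T3 = - 1 - s"
  by (simp_all add: dd_def pv_def)

definition Xm :: "real^t3^t3" where "Xm = (\<chi> r t. if t = nxt r then 1 else 0)"
definition Ym :: "real \<Rightarrow> real^t3^t3" where "Ym s = (\<chi> r t. if t = r then pv s r else 0)"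

fun Mw :: "real \<Rightarrow> word \<Rightarrow> real^t3^t3" where
  "Mw s [] = mat 1"
| "Mw s (b # w) = (if b then Ym s else Xm) ** Mw s w"

lemma Mw_append: "Mw s (u @ v) = Mw s u ** Mw s v"
  by (induction u) (auto simp: matrix_mul_assoc)

definition fw :: "real \<Rightarrow> word \<Rightarrow> real" where "fw s w = trace (Mw s w)"

lemma fw_cyc: "fw s (u @ v) = fw s (v @ u)"
  unfolding fw_def Mw_append by (rule trace_mul_sym)

definition WN :: "nat \<Rightarrow> word set" where "WN n = {w. length w = n}"
definition PN :: "nat \<Rightarrow> (word \<times> word) set" where "PN n = {(u, v). length u + length v = n}"

lemma finite_WN: "finite (WN n)"
proof -
  have "WN n = {w. set w \<subseteq> UNIV \<and> length w = n}" by (auto simp: WN_def)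
  then show ?thesis using finite_lists_length_eq[of "UNIV :: bool set" n] by simp
qed

lemma finite_PN: "finite (PN n)"
proof -
  have fl: "finite {w::word. length w \<le> n}" using finite_lists_length_le[of "UNIV::bool set" n] by simp
  have "PN n \<subseteq> {w. length w \<le> n} \<times> {w. length w \<le> n}"
    by (auto simp: PN_def)
  moreover have "finite ({w::word. length w \<le> n} \<times> {w::word. length w \<le> n})"
    using fl by simp
  ultimately show ?thesis by (rule finite_subset)
qed

lemma split_sum:
  "(\<Sum>w\<in>WN n. \<Sum>i\<le>length w. g (take i w) (drop i w)) = (\<Sum>(u, v)\<in>PN n. g u v)"
proof -
  have "(\<Sum>w\<in>WN n. \<Sum>i\<le>length w. g (take i w) (drop i w)) =
        (\<Sum>(w, i)\<in>Sigma (WN n) (\<lambda>w. {..length w}). g (take i w) (drop i w))"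
    by (rule sum.Sigma) (auto simp: finite_WN)
  also have "\<dots> = (\<Sum>(u, v)\<in>PN n. g u v)"
    by (rule sum.reindex_bij_witness[where i = "\<lambda>(u, v). (u @ v, length u)"
          and j = "\<lambda>(w, i). (take i w, drop i w)"])
       (auto simp: WN_def PN_def min_def)
  finally show ?thesis .
qed

definition Phi :: "real \<Rightarrow> nat \<Rightarrow> tens2 \<Rightarrow> real" where
  "Phi s n t = (\<Sum>(u, v)\<in>PN n. t (u, v) * fw s (u @ v))"
definition theta :: "real \<Rightarrow> nat \<Rightarrow> ncpoly \<Rightarrow> real" where
  "theta s n p = (\<Sum>w\<in>WN n. p w * fw s w)"

lemma theta_amul: "theta s n (amul a b) = Phi s n (tens a b)"
proof -
  have "theta s n (amul a b) = (\<Sum>w\<in>WN n. \<Sum>i\<le>length w. a (take i w) * b (drop i w) * fw s w)"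
    unfolding theta_def amul_def by (simp add: sum_distrib_right)
  also have "\<dots> = (\<Sum>w\<in>WN n. \<Sum>i\<le>length w. (\<lambda>u v. a u * b v * fw s (u @ v)) (take i w) (drop i w))"
    by simp
  also have "\<dots> = (\<Sum>(u, v)\<in>PN n. a u * b v * fw s (u @ v))"
    by (rule split_sum)
  also have "\<dots> = Phi s n (tens a b)"
    unfolding Phi_def tens_def by (simp add: case_prod_beta)
  finally show ?thesis .
qed

lemma Phi_swap: "Phi s n (tens a b) = Phi s n (tens b a)"
  unfolding Phi_def tens_def
  by (rule sum.reindex_bij_witness[where i = "\<lambda>(u, v). (v, u)" and j = "\<lambda>(u, v). (v, u)"])
     (auto simp: PN_def fw_cyc[of s _ ] mult.commute)

lemma theta_comm: "theta s n (amul a b) = theta s n (amul b a)"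
  by (simp add: theta_amul Phi_swap)

lemma theta_diff: "theta s n (p - q) = theta s n p - theta s n q"
  by (simp add: theta_def sum_subtractf left_diff_distrib)

lemma Phi_add: "Phi s n (x + y) = Phi s n x + Phi s n y"
  by (simp add: Phi_def sum.distrib distrib_right case_prod_beta)
lemma Phi_diff: "Phi s n (x - y) = Phi s n x - Phi s n y"
  by (simp add: Phi_def sum_subtractf left_diff_distrib case_prod_beta)
lemma Phi_scale: "Phi s n (tscale c x) = c * Phi s n x"
  by (simp add: Phi_def tscale_def sum_distrib_left case_prod_beta mult.assoc)
lemma Phi_zero: "Phi s n 0 = 0"
  by (simp add: Phi_def)

lemma Phi_inv: "Phi s n (tens a (lbr b c) - tens (lbr a b) c) = 0"
proof -
  have "theta s n (amul a (amul c b)) = theta s n (amul (amul b a) c)"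
    by (metis amul_assoc theta_comm)
  then show ?thesis
    unfolding Phi_diff theta_amul[symmetric] lbr_def amul_diff_left amul_diff_right theta_diff amul_assoc
    by simp
qed

lemma Phi_RelF: "t \<in> RelF \<Longrightarrow> Phi s n t = 0"
  unfolding RelF_def
proof (induction t rule: VT.span_induct_alt)
  case base then show ?case by (rule Phi_zero)
next
  case (step c x y)
  from step.hyps(1) consider (a) a b where "x = tens a b - tens b a"
    | (b) a b c where "x = tens a (lbr b c) - tens (lbr a b) c" by blast
  then have "Phi s n x = 0"
  proof cases
    case a then show ?thesis by (simp only: Phi_diff Phi_swap[of s n a b])
  next
    case b then show ?thesis by (simp only: Phi_inv)
  qed
  then show ?case using step.IH unfolding Phi_add Phi_scale by simp
qed



definition rho :: "real \<Rightarrow> nat \<Rightarrow> ncpoly \<Rightarrow> real^t3^t3" where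
  "rho s n p = (\<Sum>w\<in>WN n. p w *\<^sub>R Mw s w)"
definition hl :: "ncpoly \<Rightarrow> nat \<Rightarrow> bool" where
  "hl p n \<longleftrightarrow> (\<forall>w. p w \<noteq> 0 \<longrightarrow> length w = n)"

lemma hom_hl: "hom p a b \<Longrightarrow> hl p (a + b)"
  unfolding hom_def hl_def using length_nx_ny by metis

lemma trace_sum: "trace (\<Sum>a\<in>A. (f a :: real^t3^t3)) = (\<Sum>a\<in>A. trace (f a))"
  by (induction A rule: infinite_finite_induct) (simp_all add: trace_add trace_def[of 0])

lemma trace_scaleR: "trace (c *\<^sub>R A) = c * trace A"
  by (simp add: trace_def sum_distrib_left)

lemma theta_rho: "theta s n p = trace (rho s n p)"
  unfolding theta_def rho_def trace_sum trace_scaleR fw_def ..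

lemma mm_add_left: "((A::real^t3^t3) + B) ** C = A ** C + B ** C"
  by (simp add: matrix_matrix_mult_def vec_eq_iff distrib_right sum.distrib)

lemma mm_sum_left: "(\<Sum>a\<in>S. f a) ** (B::real^t3^t3) = (\<Sum>a\<in>S. f a ** B)"
  by (simp add: matrix_matrix_mult_def vec_eq_iff sum_distrib_right sum.swap[of _ UNIV S])

lemma mm_sum_right: "(B::real^t3^t3) ** (\<Sum>a\<in>S. f a) = (\<Sum>a\<in>S. B ** f a)"
  by (simp add: matrix_matrix_mult_def vec_eq_iff sum_distrib_left sum.swap[of _ UNIV S])

lemma mm_scale: "(a *\<^sub>R (A::real^t3^t3)) ** (b *\<^sub>R B) = (a * b) *\<^sub>R (A ** B)"
  by (simp add: matrix_matrix_mult_def vec_eq_iff sum_distrib_left mult_ac)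

lemma amul_single:
  assumes p: "hl p n1" and w: "length w = n1 + n2"
  shows "amul p q w = p (take n1 w) * q (drop n1 w)"
proof -
  have n1: "n1 \<in> {..length w}" using w by simp
  have "amul p q w = p (take n1 w) * q (drop n1 w) + (\<Sum>i\<in>{..length w} - {n1}. p (take i w) * q (drop i w))"
    unfolding amul_def by (rule sum.remove[OF _ n1]) simp
  moreover have "(\<Sum>i\<in>{..length w} - {n1}. p (take i w) * q (drop i w)) = 0"
  proof (rule sum.neutral, rule ballI)
    fix i assume i: "i \<in> {..length w} - {n1}"
    have "p (take i w) = 0"
    proof (rule ccontr)
      assume "p (take i w) \<noteq> 0"
      then have "length (take i w) = n1" using p unfolding hl_def by blast
      then show False using i by auto
    qed
    then show "p (take i w) * q (drop i w) = 0" by simp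
  qed
  ultimately show ?thesis by simp
qed

lemma rho_mult:
  assumes p: "hl p n1" and q: "hl q n2"
  shows "rho s (n1 + n2) (amul p q) = rho s n1 p ** rho s n2 q"
proof -
  have "rho s (n1 + n2) (amul p q) =
     (\<Sum>w\<in>WN (n1 + n2). (p (take n1 w) * q (drop n1 w)) *\<^sub>R (Mw s (take n1 w) ** Mw s (drop n1 w)))"
    unfolding rho_def
  proof (rule sum.cong[OF refl])
    fix w assume "w \<in> WN (n1 + n2)"
    then have "length w = n1 + n2" by (simp add: WN_def)
    then show "amul p q w *\<^sub>R Mw s w =
      (p (take n1 w) * q (drop n1 w)) *\<^sub>R (Mw s (take n1 w) ** Mw s (drop n1 w))"
      using amul_single[OF p] Mw_append[of s "take n1 w" "drop n1 w"] by simp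
  qed
  also have "\<dots> = (\<Sum>(u, v)\<in>WN n1 \<times> WN n2. (p u * q v) *\<^sub>R (Mw s u ** Mw s v))"
    by (rule sum.reindex_bij_witness[where i = "\<lambda>(u, v). u @ v" and j = "\<lambda>w. (take n1 w, drop n1 w)"])
       (auto simp: WN_def)
  also have "\<dots> = (\<Sum>u\<in>WN n1. \<Sum>v\<in>WN n2. (p u * q v) *\<^sub>R (Mw s u ** Mw s v))"
    by (rule sum.cartesian_product[symmetric])
  also have "\<dots> = (\<Sum>u\<in>WN n1. \<Sum>v\<in>WN n2. (p u *\<^sub>R Mw s u) ** (q v *\<^sub>R Mw s v))"
    unfolding mm_scale ..
  also have "\<dots> = (\<Sum>u\<in>WN n1. (p u *\<^sub>R Mw s u) ** rho s n2 q)"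
    unfolding rho_def mm_sum_right ..
  also have "\<dots> = rho s n1 p ** rho s n2 q"
    unfolding rho_def[of s n1] mm_sum_left ..
  finally show ?thesis .
qed

lemma rho_diff: "rho s n (p - q) = rho s n p - rho s n q"
  by (simp add: rho_def scaleR_diff_left sum_subtractf)

lemma rho_lbr:
  assumes "hl a n1" "hl b n2"
  shows "rho s (n1 + n2) (lbr a b) = rho s n1 a ** rho s n2 b - rho s n2 b ** rho s n1 a"
proof -
  have "rho s (n1 + n2) (amul b a) = rho s n2 b ** rho s n1 a"
    using rho_mult[OF assms(2,1), of s] by (simp add: add.commute)
  then show ?thesis unfolding lbr_def rho_diff rho_mult[OF assms] by simp
qed

lemma WN1: "WN (Suc 0) = {[False], [True]}"
proof -
  have "w = [False] \<or> w = [True]" if "length w = Suc 0" for w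
  proof -
    have "\<exists>b. w = [b]" using that by (cases w) auto
    then obtain b where "w = [b]" by blast
    then show ?thesis by (cases b) auto
  qed
  then show ?thesis by (auto simp: WN_def)
qed

lemma rho_letX: "rho s (Suc 0) letX = Xm"
  by (simp add: rho_def WN1 letX_def)
lemma rho_letY: "rho s (Suc 0) letY = Ym s"
  by (simp add: rho_def WN1 letY_def)

definition XP :: "real \<Rightarrow> nat \<Rightarrow> real^t3^t3" where
  "XP s i = (\<chi> r t. if t = nxt r then dd s r ^ i else 0)"

lemma sum_delta_mult: "(\<Sum>k\<in>UNIV. (if k = (r::t3) then a else 0) * f k) = a * (f r :: real)"
  by (cases r) (simp_all add: sum_t3)

lemma sum_delta_mult': "(\<Sum>k\<in>UNIV. f k * (if (t::t3) = k then a k else 0)) = f t * (a t :: real)"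
  by (cases t) (simp_all add: sum_t3)

lemma Ym_mult: "(Ym s ** A) $ r $ t = pv s r * A $ r $ t"
proof -
  have "(Ym s ** A) $ r $ t = (\<Sum>k\<in>UNIV. (if k = r then pv s r else 0) * A $ k $ t)"
    unfolding matrix_matrix_mult_def Ym_def by (simp add: eq_commute)
  then show ?thesis by (simp only: sum_delta_mult)
qed

lemma mult_Ym: "(A ** Ym s) $ r $ t = A $ r $ t * pv s t"
proof -
  have "(A ** Ym s) $ r $ t = (\<Sum>k\<in>UNIV. A $ r $ k * (if t = k then pv s k else 0))"
    unfolding matrix_matrix_mult_def Ym_def by simp
  then show ?thesis by (simp only: sum_delta_mult')
qed

lemma hl_xs: "hl (xs i) (Suc i)" using hom_hl[OF hom_xs, of i] by simp
lemma hl_letY: "hl letY (Suc 0)" using hom_hl[OF hom_letY] by simp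

lemma rho_xs: "rho s (Suc i) (xs i) = XP s i"
proof (induction i)
  case 0
  show ?case unfolding XP_def power_0 by (simp add: rho_letX Xm_def)
next
  case (Suc i)
  have "rho s (Suc 0 + Suc i) (lbr letY (xs i)) = Ym s ** XP s i - XP s i ** Ym s"
    using rho_lbr[OF hl_letY hl_xs[of i], of s] unfolding rho_letY Suc.IH .
  moreover have "xs (Suc i) = lbr letY (xs i)" by (simp add: xs.simps(2))
  moreover have "Ym s ** XP s i - XP s i ** Ym s = XP s (Suc i)"
    by (simp add: vec_eq_iff Ym_mult mult_Ym XP_def dd_def algebra_simps)
  ultimately show ?case by simp
qed

lemma XP_mult: "XP s a ** XP s b = (\<chi> r t. if t = nxt (nxt r) then dd s r ^ a * dd s (nxt r) ^ b else 0)"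
proof -
  have "(XP s a ** XP s b) $ r $ t = (if t = nxt (nxt r) then dd s r ^ a * dd s (nxt r) ^ b else 0)" for r t
  proof -
    have "(XP s a ** XP s b) $ r $ t = (\<Sum>k\<in>UNIV. (if k = nxt r then dd s r ^ a else 0) *
        (if t = nxt k then dd s k ^ b else 0))"
      unfolding matrix_matrix_mult_def XP_def by (simp add: eq_commute)
    also have "\<dots> = dd s r ^ a * (if t = nxt (nxt r) then dd s (nxt r) ^ b else 0)"
      by (rule sum_delta_mult)
    finally show ?thesis by simp
  qed
  then show ?thesis by (simp add: vec_eq_iff)
qed

lemma trace_XP3: "trace (XP s i ** (XP s j ** XP s k)) =
   (\<Sum>r\<in>UNIV. dd s r ^ i * (dd s (nxt r) ^ j * dd s (nxt (nxt r)) ^ k))"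
proof -
  have "(XP s i ** (XP s j ** XP s k)) $ r $ r = dd s r ^ i * (dd s (nxt r) ^ j * dd s (nxt (nxt r)) ^ k)" for r
  proof -
    have "(XP s i ** (XP s j ** XP s k)) $ r $ r = (\<Sum>q\<in>UNIV. (if q = nxt r then dd s r ^ i else 0) *
        (if r = nxt (nxt q) then dd s q ^ j * dd s (nxt q) ^ k else 0))"
      unfolding matrix_matrix_mult_def[of "XP s i"] XP_mult unfolding XP_def by (simp add: eq_commute)
    also have "\<dots> = dd s r ^ i * (if r = nxt (nxt (nxt r)) then dd s (nxt r) ^ j * dd s (nxt (nxt r)) ^ k else 0)"
      by (rule sum_delta_mult)
    finally show ?thesis by (simp add: nxt3)
  qed
  then show ?thesis by (simp add: trace_def)
qed

definition GG :: "real \<Rightarrow> nat \<Rightarrow> nat \<Rightarrow> nat \<Rightarrow> real" where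
  "GG s i j k = s ^ i * ((- 1 - s) ^ k - (- 1 - s) ^ j) + s ^ j * ((- 1 - s) ^ i - (- 1 - s) ^ k)
     + s ^ k * ((- 1 - s) ^ j - (- 1 - s) ^ i)"

lemma trace_formula: "trace (XP s i ** (XP s j ** XP s k - XP s k ** XP s j)) = GG s i j k"
proof -
  have eq: "XP s i ** (XP s j ** XP s k - XP s k ** XP s j) =
        XP s i ** (XP s j ** XP s k) - XP s i ** (XP s k ** XP s j)"
    by (simp add: matrix_matrix_mult_def vec_eq_iff sum_subtractf right_diff_distrib)
  show ?thesis unfolding eq trace_sub trace_XP3 sum_t3 GG_def
    by (simp add: algebra_simps)
qed



lemma Phi_tau:
  assumes "i + j + k = m"
  shows "Phi s (m + 3) (tau i j k) = GG s i j k"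
proof -
  have h2: "hl (lbr (xs j) (xs k)) (Suc j + Suc k)"
    using hom_hl[OF hom2[of j k]] by simp
  have e: "m + 3 = Suc i + (Suc j + Suc k)" using assms by simp
  have "rho s (m + 3) (amul (xs i) (lbr (xs j) (xs k))) = XP s i ** (XP s j ** XP s k - XP s k ** XP s j)"
    unfolding e rho_mult[OF hl_xs h2] rho_lbr[OF hl_xs hl_xs] rho_xs ..
  then show ?thesis
    unfolding tau_def theta_amul[symmetric] theta_rho trace_formula[symmetric] by simp
qed

lemma Phi_sum: "Phi s n (\<Sum>i\<in>J. f i) = (\<Sum>i\<in>J. Phi s n (f i))"
  unfolding Phi_def fun_sum_apply sum_distrib_right case_prod_beta by (rule sum.swap)

definition QQ :: "real poly" where "QQ = [:-1, -1:]"
definition PP :: "nat \<Rightarrow> nat \<Rightarrow> nat \<Rightarrow> real poly" where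
  "PP i j k = monom 1 i * (QQ ^ k - QQ ^ j) + monom 1 j * (QQ ^ i - QQ ^ k) + monom 1 k * (QQ ^ j - QQ ^ i)"

lemma poly_QQ: "poly QQ s = - 1 - s" by (simp add: QQ_def)

lemma poly_PP: "poly (PP i j k) s = GG s i j k"
  by (simp add: PP_def poly_QQ GG_def poly_monom)

lemma coeff_PP:
  assumes "i < j" "i < k" "n \<le> i"
  shows "coeff (PP i j k) n = (if n = i then (- 1) ^ k - (- 1) ^ j else 0)"
  using assms by (auto simp: PP_def coeff_monom_mult coeff_0_power QQ_def)

lemma sgn_diff: "odd (a + b) \<Longrightarrow> (- 1 :: real) ^ a - (- 1) ^ b \<noteq> 0"
  by (cases "even a") auto

lemma finite_Iset: "finite (Iset m)"
  by (rule finite_subset[of _ "{..m}"]) (auto simp: Iset_def)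

lemma LB:
  assumes J: "J \<subseteq> Iset m" "finite J"
    and R: "(\<Sum>i\<in>J. tscale (c i) (eI m i)) \<in> RelF"
  shows "\<forall>i\<in>J. c i = 0"
proof (rule ccontr)
  assume neg: "\<not> (\<forall>i\<in>J. c i = 0)"
  let ?N = "{i \<in> J. c i \<noteq> 0}"
  have Nne: "?N \<noteq> {}" using neg by blast
  have Nfin: "finite ?N" using J by simp
  define i0 where "i0 = Min ?N"
  have i0N: "i0 \<in> ?N" unfolding i0_def using Min_in[OF Nfin Nne] .
  have i0min: "i0 \<le> i" if "i \<in> ?N" for i unfolding i0_def using Min_le[OF Nfin that] .
  define k where "k x = m - 2 * x - 1" for x
  have kk: "i < k i" "i + Suc i + k i = m" if "i \<in> J" for i
    using that J unfolding k_def Iset_def by auto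
  define P where "P = (\<Sum>i\<in>J. smult (c i) (PP i (Suc i) (k i)))"
  have "poly P s = 0" for s
  proof -
    have "Phi s (m + 3) (\<Sum>i\<in>J. tscale (c i) (eI m i)) = 0" using R by (rule Phi_RelF)
    moreover have "Phi s (m + 3) (\<Sum>i\<in>J. tscale (c i) (eI m i)) = (\<Sum>i\<in>J. c i * GG s i (Suc i) (k i))"
      unfolding Phi_sum Phi_scale
    proof (rule sum.cong[OF refl])
      fix i assume "i \<in> J"
      then show "c i * Phi s (m + 3) (eI m i) = c i * GG s i (Suc i) (k i)"
        unfolding eI_def k_def[symmetric] using Phi_tau[OF kk(2)] by simp
    qed
    moreover have "poly P s = (\<Sum>i\<in>J. c i * GG s i (Suc i) (k i))"
      unfolding P_def poly_sum poly_smult poly_PP ..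
    ultimately show ?thesis by simp
  qed
  then have "P = 0" using poly_all_0_iff_0 by blast
  then have "coeff P i0 = 0" by simp
  moreover have "coeff P i0 = c i0 * ((- 1) ^ k i0 - (- 1) ^ Suc i0)"
  proof -
    have "coeff P i0 = (\<Sum>i\<in>J. c i * coeff (PP i (Suc i) (k i)) i0)"
      unfolding P_def coeff_sum coeff_smult ..
    also have "\<dots> = c i0 * coeff (PP i0 (Suc i0) (k i0)) i0 +
        (\<Sum>i\<in>J - {i0}. c i * coeff (PP i (Suc i) (k i)) i0)"
      by (rule sum.remove) (use J i0N in auto)
    also have "(\<Sum>i\<in>J - {i0}. c i * coeff (PP i (Suc i) (k i)) i0) = 0"
    proof (rule sum.neutral, rule ballI)
      fix i assume i: "i \<in> J - {i0}"
      show "c i * coeff (PP i (Suc i) (k i)) i0 = 0"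
      proof (cases "c i = 0")
        case False
        then have "i0 \<le> i" using i i0min by auto
        then have "i0 < i" using i by auto
        then have "coeff (PP i (Suc i) (k i)) i0 = 0" using coeff_PP[of i "Suc i" "k i" i0] kk[of i] i by auto
        then show ?thesis by simp
      qed simp
    qed
    also have "coeff (PP i0 (Suc i0) (k i0)) i0 = (- 1) ^ k i0 - (- 1) ^ Suc i0"
      using coeff_PP[of i0 "Suc i0" "k i0" i0] kk[of i0] i0N by auto
    finally show ?thesis by simp
  qed
  moreover have "(- 1 :: real) ^ k i0 - (- 1) ^ Suc i0 \<noteq> 0"
  proof (rule sgn_diff)
    have "k i0 + Suc i0 = m - i0" using kk(2)[of i0] i0N by auto
    moreover have "odd (m - i0)" using i0N J unfolding Iset_def by auto
    ultimately show "odd (k i0 + Suc i0)" by simp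
  qed
  ultimately show False using i0N by simp
qed

lemma Iset_rec: "3 \<le> m \<Longrightarrow> Iset m = Suc ` Iset (m - 3) \<union> (if odd m then {0} else {})"
proof -
  assume m: "3 \<le> m"
  have "i \<in> Iset m \<longleftrightarrow> i \<in> Suc ` Iset (m - 3) \<union> (if odd m then {0} else {})" for i
  proof (cases i)
    case 0 then show ?thesis using m by (auto simp: Iset_def)
  next
    case (Suc i')
    have "m - i = (m - 3 - i') + 2 \<or> 3 * i + 3 > m" using Suc by auto
    then show ?thesis using Suc m by (auto simp: Iset_def)
  qed
  then show ?thesis by blast
qed

lemma arith_rec: "(n::int) \<ge> 3 \<Longrightarrow>
  (n - 1) div 2 - (n - 1) div 3 = ((n - 3) - 1) div 2 - ((n - 3) - 1) div 3 + (if odd n then 1 else 0)"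
proof -
  have h1: "(n - 4) div 3 = (n - 1) div 3 - 1"
    using div_add_self2[of 3 "n - 4"] by simp
  have h2: "(n - 4) div 2 = (n - 2) div 2 - 1"
    using div_add_self2[of 2 "n - 4"] by simp
  have h3: "(n - 1) div 2 = (n - 2) div 2 + (if odd n then 1 else 0)"
  proof (cases "odd n")
    case True
    then obtain b where "n = 2 * b + 1" by (rule oddE)
    then show ?thesis by simp
  next
    case False
    then have "even n" by simp
    then obtain b where "n = 2 * b" by (rule evenE)
    moreover have "(2 * b - 1) div 2 = b - 1"
    proof -
      have "2 * b - 1 = 2 * (b - 1) + 1" by simp
      then show ?thesis by simp
    qed
    moreover have "(2 * b - 2) div 2 = b - 1"
    proof -
      have "2 * b - 2 = 2 * (b - 1)" by simp
      then show ?thesis by simp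
    qed
    ultimately show ?thesis using False by simp
  qed
  show ?thesis using h1 h2 h3 by simp
qed

lemma card_Iset: "int (card (Iset m)) = (int m - 1) div 2 - (int m - 1) div 3"
proof (induction m rule: less_induct)
  case (less m)
  show ?case
  proof (cases "3 \<le> m")
    case False
    then have "Iset m = {}" by (auto simp: Iset_def)
    moreover have "m = 0 \<or> m = 1 \<or> m = 2" using False by auto
    ultimately show ?thesis by auto
  next
    case True
    have d: "Suc ` Iset (m - 3) \<inter> (if odd m then {0} else {}) = {}" by auto
    have "card (Iset m) = card (Suc ` Iset (m - 3)) + card (if odd m then {0::nat} else {})"
      unfolding Iset_rec[OF True] by (rule card_Un_disjoint) (use finite_Iset d in auto)
    also have "card (Suc ` Iset (m - 3)) = card (Iset (m - 3))" by (rule card_image) simp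
    finally have c: "int (card (Iset m)) = int (card (Iset (m - 3))) + (if odd m then 1 else 0)" by auto
    have IH: "int (card (Iset (m - 3))) = (int m - 4) div 2 - (int m - 4) div 3"
      using less.IH[of "m - 3"] True by (simp add: of_nat_diff)
    show ?thesis using c IH arith_rec[of "int m"] True by simp
  qed
qed



definition delta :: "word \<times> word \<Rightarrow> tens2" where
  "delta p = (\<lambda>q. if q = p then 1 else 0)"

lemma B_fin: "LtensL_bideg 3 m \<subseteq> VT.span (delta ` PN (m + 3))"
proof
  fix t assume t: "t \<in> LtensL_bideg 3 m"
  have "t = (\<Sum>p\<in>PN (m + 3). tscale (t p) (delta p))"
  proof (rule ext)
    fix q :: "word \<times> word"
    obtain u v where q: "q = (u, v)" by fastforce
    have "(\<Sum>p\<in>PN (m + 3). tscale (t p) (delta p)) q = (\<Sum>p\<in>PN (m + 3). if q = p then t p else 0)"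
      unfolding fun_sum_apply tscale_def delta_def by (rule sum.cong) auto
    also have "\<dots> = (if q \<in> PN (m + 3) then t q else 0)"
      using finite_PN by (simp add: sum.delta)
    also have "\<dots> = t q"
    proof (cases "q \<in> PN (m + 3)")
      case False
      have "t (u, v) = 0"
      proof (rule ccontr)
        assume "t (u, v) \<noteq> 0"
        then have "nx u + nx v = 3 \<and> ny u + ny v = m" using t unfolding LtensL_bideg_def by blast
        then have "length u + length v = m + 3" using length_nx_ny[of u] length_nx_ny[of v] by simp
        then show False using False q by (simp add: PN_def)
      qed
      then show ?thesis using False q by simp
    qed simp
    finally show "t q = (\<Sum>p\<in>PN (m + 3). tscale (t p) (delta p)) q" by simp
  qed
  also have "\<dots> \<in> VT.span (delta ` PN (m + 3))"
    by (intro VT.span_sum VT.span_scale VT.span_base) auto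
  finally show "t \<in> VT.span (delta ` PN (m + 3))" .
qed

lemma eI_notin: "i \<in> Iset m \<Longrightarrow> eI m i \<notin> RelF"
proof
  assume i: "i \<in> Iset m" and e: "eI m i \<in> RelF"
  have "(\<Sum>k\<in>{i}. tscale ((\<lambda>_. 1) k) (eI m k)) = eI m i" by (simp add: tscale_def)
  then have "\<forall>k\<in>{i}. (1::real) = 0" using LB[of "{i}" m "\<lambda>_. 1"] i e by simp
  then show False by simp
qed

lemma eI_inj: "inj_on (eI m) (Iset m)"
proof
  fix i i' assume i: "i \<in> Iset m" and i': "i' \<in> Iset m" and e: "eI m i = eI m i'"
  show "i = i'"
  proof (rule ccontr)
    assume ne: "i \<noteq> i'"
    define c where "c k = (if k = i then 1 else - 1 :: real)" for k
    have "(\<Sum>k\<in>{i, i'}. tscale (c k) (eI m k)) = tscale 1 (eI m i) + tscale (- 1) (eI m i')"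
      using ne by (simp add: c_def)
    also have "\<dots> = 0" using e by (simp add: tscale_def fun_eq_iff)
    finally have "(\<Sum>k\<in>{i, i'}. tscale (c k) (eI m k)) \<in> RelF"
      by (simp add: RelF_def VT.span_zero)
    then have "\<forall>k\<in>{i, i'}. c k = 0" using LB[of "{i, i'}" m c] i i' by simp
    then show False by (simp add: c_def)
  qed
qed

lemma RelF_subspace: "VT.subspace RelF"
  unfolding RelF_def by (rule VT.subspace_span)

theorem main_dim: "dimF 3 m = card (Iset m)"
proof -
  let ?B = "LtensL_bideg 3 m"
  let ?C = "LtensL_bideg 3 m \<inter> RelF"
  let ?E = "eI m ` Iset m"
  obtain K where K: "K \<subseteq> ?C" "VT.independent K" "?C \<subseteq> VT.span K" "card K = VT.dim ?C"
    by (rule VT.basis_exists)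
  have Kfin: "finite K"
    using VT.independent_span_bound[OF _ K(2), of "delta ` PN (m + 3)"] finite_PN K(1) B_fin by blast
  have Efin: "finite ?E" using finite_Iset by simp
  have KR: "K \<subseteq> RelF" using K(1) by blast
  have spanK: "VT.span K \<subseteq> RelF"
    using KR RelF_subspace by (rule VT.span_minimal)
  have disj: "K \<inter> ?E = {}" using KR eI_notin by blast
  have indep: "VT.independent (K \<union> ?E)"
  proof (rule VT.independent_if_scalars_zero)
    show "finite (K \<union> ?E)" using Kfin Efin by simp
    fix f x assume sum0: "(\<Sum>x\<in>K \<union> ?E. tscale (f x) x) = 0" and x: "x \<in> K \<union> ?E"
    have split: "(\<Sum>x\<in>K \<union> ?E. tscale (f x) x) = (\<Sum>x\<in>K. tscale (f x) x) + (\<Sum>x\<in>?E. tscale (f x) x)"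
      by (rule sum.union_disjoint) (use Kfin Efin disj in auto)
    have Esum: "(\<Sum>x\<in>?E. tscale (f x) x) = (\<Sum>i\<in>Iset m. tscale (f (eI m i)) (eI m i))"
      by (rule sum.reindex[OF eI_inj, unfolded comp_def])
    have "(\<Sum>x\<in>K. tscale (f x) x) \<in> VT.span K"
      by (rule VT.span_sum, rule VT.span_scale, rule VT.span_base)
    then have "(\<Sum>x\<in>K. tscale (f x) x) \<in> RelF" using spanK by blast
    then have "- (\<Sum>x\<in>K. tscale (f x) x) \<in> RelF" using RelF_subspace by (rule VT.subspace_neg[rotated])
    moreover have "(\<Sum>x\<in>?E. tscale (f x) x) = - (\<Sum>x\<in>K. tscale (f x) x)"
      using sum0 unfolding split by (simp add: eq_neg_iff_add_eq_0 add.commute)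
    ultimately have sR: "(\<Sum>i\<in>Iset m. tscale (f (eI m i)) (eI m i)) \<in> RelF" unfolding Esum by simp
    have fE: "\<forall>i\<in>Iset m. f (eI m i) = 0"
      using LB[where c = "\<lambda>i. f (eI m i)" and J = "Iset m" and m = m, OF subset_refl finite_Iset sR] .
    have "(\<Sum>x\<in>?E. tscale (f x) x) = 0"
      unfolding Esum using fE by (simp add: tscale_def fun_eq_iff)
    then have "(\<Sum>x\<in>K. tscale (f x) x) = 0" using sum0 unfolding split by simp
    then have fK: "\<forall>x\<in>K. f x = 0"
      using K(2) Kfin unfolding VT.independent_explicit_finite_subsets by blast
    show "f x = 0" using x fK fE by blast
  qed
  have sub: "K \<union> ?E \<subseteq> ?B" using K(1) eI_B by blast
  have span: "?B \<subseteq> VT.span (K \<union> ?E)"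
  proof -
    have "?E \<union> BR m \<subseteq> VT.span (K \<union> ?E)"
    proof -
      have "BR m \<subseteq> VT.span K" using K(3) unfolding BR_def .
      also have "\<dots> \<subseteq> VT.span (K \<union> ?E)" by (rule VT.span_mono) blast
      finally show ?thesis using VT.span_superset[of "K \<union> ?E"] by blast
    qed
    then have "Zpp m \<subseteq> VT.span (K \<union> ?E)"
      unfolding Zpp_def by (intro VT.span_minimal VT.subspace_span)
    then show ?thesis using B_sub[of m] by blast
  qed
  have "VT.dim ?B = card (K \<union> ?E)"
    by (rule VT.dim_unique[OF sub span indep refl])
  also have "\<dots> = card K + card ?E"
    by (rule card_Un_disjoint) (use Kfin Efin disj in auto)
  also have "card ?E = card (Iset m)" by (rule card_image[OF eI_inj])
  finally have "VT.dim ?B = VT.dim ?C + card (Iset m)" using K(4) by simp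
  then show ?thesis unfolding dimF_def by simp
qed

theorem mainTheorem10:
  fixes m :: nat
  shows "int (dimF 3 m) = (int m - 1) div 2 - (int m - 1) div 3"
  using main_dim card_Iset by simp

end
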